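(* Let $\xi\in G$ be $\pi_p$-contracting and $b\in Z^1(G,\pi_p)$. Then there exists $c\in Z^1(G,\pi_p)$ with $b-c\in B^1(G,\pi_p)$ and $c(\xi)=0$.
   Context: $G$ is a locally compact second countable group with left Haar measure; $(\pi_0,V)$ is a continuous representation of $G$ on a separable Banach space $V$; for $p>1$, $\pi_p$ acts on the Bochner space $L^p(G,V)$ by $(\pi(g)f)(h)=\pi_0(g)(f(hg))$. $Z^1(G,\pi_p)$ is the space of continuous $b:G\to L^p(G,V)$ with $b(gh)=b(g)+\pi(g)b(h)$, and $B^1(G,\pi_p)=\{g\mapsto f-\pi(g)f:f\in L^p(G,V)\}$. $\xi$ is $\pi_p$-contracting if $\lim_{n\to\infty}|||\pi(\xi^n)|||_{L^p(G,V)}=0$. *)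

theory Defs
  imports "HOL-Analysis.Analysis"
begin

text \<open>The (possibly non-abelian) group G is a type of class
 topological_group_add, written additively: the product gh is written g + h,
 the identity is 0. Elements of the Bochner space L^p(G,V) are represented by
 Borel measurable functions G \<Rightarrow> V with p-integrable norm; equality in L^p
 is equality almost everywhere.\<close>

definition lcsc_group :: "'g::{topological_group_add,t2_space,second_countable_topology} itself \<Rightarrow> bool" where
  "lcsc_group _ \<longleftrightarrow> locally_compact_space (euclidean :: 'g topology)"

text \<open>Left Haar measure: a Borel measure, left invariant, finite on compact sets,
 positive on nonempty open sets (in an lcsc group such a measure is automatically Radon).\<close>
definition left_haar_measure :: "'g::{topological_group_add,t2_space,second_countable_topology} measure \<Rightarrow> bool" where
  "left_haar_measure \<mu> \<longleftrightarrow>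
     sets \<mu> = sets borel \<and>
     (\<forall>g A. A \<in> sets borel \<longrightarrow> emeasure \<mu> ((\<lambda>h. g + h) ` A) = emeasure \<mu> A) \<and>
     (\<forall>K. compact K \<longrightarrow> emeasure \<mu> K < \<infinity>) \<and>
     (\<forall>U. open U \<and> U \<noteq> {} \<longrightarrow> emeasure \<mu> U > 0)"

definition cont_rep :: "('g::topological_group_add \<Rightarrow> 'v::banach \<Rightarrow> 'v) \<Rightarrow> bool" where
  "cont_rep \<pi>0 \<longleftrightarrow>
     (\<forall>g. bounded_linear (\<pi>0 g)) \<and>
     \<pi>0 0 = id \<and>
     (\<forall>g h. \<pi>0 (g + h) = \<pi>0 g \<circ> \<pi>0 h) \<and>
     (\<forall>v. continuous_on UNIV (\<lambda>g. \<pi>0 g v))"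

definition Lp :: "'g measure \<Rightarrow> real \<Rightarrow> ('g \<Rightarrow> 'v::banach) set" where
  "Lp \<mu> p = {f. f \<in> borel_measurable \<mu> \<and> integrable \<mu> (\<lambda>x. norm (f x) powr p)}"

definition Lp_norm :: "'g measure \<Rightarrow> real \<Rightarrow> ('g \<Rightarrow> 'v::banach) \<Rightarrow> real" where
  "Lp_norm \<mu> p f = (\<integral>x. norm (f x) powr p \<partial>\<mu>) powr (1 / p)"

definition pi_p :: "('g::group_add \<Rightarrow> 'v \<Rightarrow> 'v) \<Rightarrow> 'g \<Rightarrow> ('g \<Rightarrow> 'v) \<Rightarrow> ('g \<Rightarrow> 'v)" where
  "pi_p \<pi>0 g f = (\<lambda>h. \<pi>0 g (f (h + g)))"

definition Lp_opnorm :: "'g measure \<Rightarrow> real \<Rightarrow> ('g::group_add \<Rightarrow> 'v::banach \<Rightarrow> 'v) \<Rightarrow> 'g \<Rightarrow> real" where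
  "Lp_opnorm \<mu> p \<pi>0 g = Sup {Lp_norm \<mu> p (pi_p \<pi>0 g f) | f. f \<in> Lp \<mu> p \<and> Lp_norm \<mu> p f \<le> 1}"

definition gpow :: "'g::group_add \<Rightarrow> nat \<Rightarrow> 'g" where
  "gpow \<xi> n = ((\<lambda>x. \<xi> + x) ^^ n) 0"

definition contracting :: "'g measure \<Rightarrow> real \<Rightarrow> ('g::group_add \<Rightarrow> 'v::banach \<Rightarrow> 'v) \<Rightarrow> 'g \<Rightarrow> bool" where
  "contracting \<mu> p \<pi>0 \<xi> \<longleftrightarrow> (\<lambda>n. Lp_opnorm \<mu> p \<pi>0 (gpow \<xi> n)) \<longlonglongrightarrow> 0"

definition Z1 :: "'g measure \<Rightarrow> real \<Rightarrow> ('g::topological_group_add \<Rightarrow> 'v::banach \<Rightarrow> 'v) \<Rightarrow> ('g \<Rightarrow> 'g \<Rightarrow> 'v) set" where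
  "Z1 \<mu> p \<pi>0 = {b.
     (\<forall>g. b g \<in> Lp \<mu> p) \<and>
     (\<forall>g0. ((\<lambda>g. Lp_norm \<mu> p (\<lambda>x. b g x - b g0 x)) \<longlongrightarrow> 0) (at g0)) \<and>
     (\<forall>g h. AE x in \<mu>. b (g + h) x = b g x + pi_p \<pi>0 g (b h) x)}"

definition B1 :: "'g measure \<Rightarrow> real \<Rightarrow> ('g::group_add \<Rightarrow> 'v::banach \<Rightarrow> 'v) \<Rightarrow> ('g \<Rightarrow> 'g \<Rightarrow> 'v) set" where
  "B1 \<mu> p \<pi>0 = {b. \<exists>f \<in> Lp \<mu> p. \<forall>g. AE x in \<mu>. b g x = f x - pi_p \<pi>0 g f x}"

end

theory Submission
  imports Defs
begin

lemma lcsc_nbhd: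
  fixes x :: "'g::{topological_group_add,t2_space,second_countable_topology}"
  assumes "lcsc_group TYPE('g)"
  shows "\<exists>U K. open U \<and> compact K \<and> x \<in> U \<and> U \<subseteq> K"
  using assms unfolding lcsc_group_def locally_compact_space_def
  by (simp add: compactin_euclidean_iff)

lemma haar_sets: "left_haar_measure \<mu> \<Longrightarrow> sets \<mu> = sets borel"
  by (simp add: left_haar_measure_def)
lemma haar_space: "left_haar_measure \<mu> \<Longrightarrow> space \<mu> = UNIV"
  using sets_eq_imp_space_eq[OF haar_sets] by auto

lemma haar_sigma_finite:
  fixes \<mu> :: "'g::{topological_group_add,t2_space,second_countable_topology} measure"
  assumes lc: "lcsc_group TYPE('g)" and h: "left_haar_measure \<mu>"
  shows "sigma_finite_measure \<mu>"
proof -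
  obtain \<B> :: "'g set set" where cB: "countable \<B>" and tB: "topological_basis \<B>"
    using ex_countable_basis by blast
  define A where "A = {B\<in>\<B>. \<exists>K. compact K \<and> B \<subseteq> K}"
  have "countable A" using cB unfolding A_def by simp
  moreover have "A \<subseteq> sets \<mu>"
    using tB haar_sets[OF h] unfolding A_def by (auto simp: topological_basis_open)
  moreover have "\<Union>A = space \<mu>"
  proof -
    have "x \<in> \<Union>A" for x
    proof -
      obtain U K where UK: "open U" "compact K" "x \<in> U" "U \<subseteq> K"
        using lcsc_nbhd[OF lc] by blast
      then obtain B where "B \<in> \<B>" "x \<in> B" "B \<subseteq> U"
        using tB by (meson topological_basisE)
      then show ?thesis using UK unfolding A_def by blast
    qed
    then show ?thesis using haar_space[OF h] by auto
  qed
  moreover have "\<forall>a\<in>A. emeasure \<mu> a \<noteq> \<infinity>"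
  proof
    fix a assume "a \<in> A"
    then obtain K where K: "compact K" "a \<subseteq> K" "a \<in> \<B>" unfolding A_def by auto
    have "a \<in> sets \<mu>" "K \<in> sets \<mu>"
      using K tB haar_sets[OF h] by (auto simp: topological_basis_open compact_imp_closed)
    then have "emeasure \<mu> a \<le> emeasure \<mu> K" using K by (simp add: emeasure_mono)
    also have "\<dots> < \<infinity>" using h K unfolding left_haar_measure_def by blast
    finally show "emeasure \<mu> a \<noteq> \<infinity>" by simp
  qed
  ultimately show ?thesis unfolding sigma_finite_measure_def by blast
qed

lemma borel_measurable_gminus[measurable (raw)]:
  fixes g :: "'a \<Rightarrow> 'b::{second_countable_topology, topological_group_add}"
  assumes g: "g \<in> borel_measurable M"
  shows "(\<lambda>x. - g x) \<in> borel_measurable M"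
  by (rule borel_measurable_continuous_on[OF _ g]) (intro continuous_intros)

lemma haar_distr_left:
  fixes m :: "'g::{topological_group_add,t2_space,second_countable_topology} measure"
  assumes h: "left_haar_measure m"
  shows "distr m borel (\<lambda>x. y + x) = m"
proof (rule measure_eqI)
  show "sets (distr m borel (\<lambda>x. y + x)) = sets m" using haar_sets[OF h] by simp
  fix A assume "A \<in> sets (distr m borel (\<lambda>x. y + x))"
  then have A: "A \<in> sets borel" by simp
  have meas: "(\<lambda>x. y + x) \<in> measurable m borel"
    using haar_sets[OF h] by (simp add: measurable_cong_sets[OF _ refl, of m borel] )
  have "(\<lambda>x. y + x) -` A \<inter> space m = (\<lambda>x. -y + x) ` A"
    using haar_space[OF h] by (auto simp: image_iff) (metis add_minus_cancel)
  then show "emeasure (distr m borel (\<lambda>x. y + x)) A = emeasure m A"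
    using h A meas unfolding left_haar_measure_def by (simp add: emeasure_distr)
qed

lemma haar_nn_left:
  fixes m :: "'g::{topological_group_add,t2_space,second_countable_topology} measure"
  assumes h: "left_haar_measure m" and f: "f \<in> borel_measurable borel"
  shows "(\<integral>\<^sup>+x. f (y + x) \<partial>m) = (\<integral>\<^sup>+x. f x \<partial>m)"
proof -
  have meas: "(\<lambda>x. y + x) \<in> measurable m borel"
    using haar_sets[OF h] by (simp add: measurable_cong_sets[OF _ refl, of m borel] )
  have "(\<integral>\<^sup>+x. f x \<partial>m) = (\<integral>\<^sup>+x. f x \<partial>(distr m borel (\<lambda>x. y + x)))"
    using haar_distr_left[OF h] by simp
  also have "\<dots> = (\<integral>\<^sup>+x. f (y + x) \<partial>m)"
    using meas f by (simp add: nn_integral_distr)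
  finally show ?thesis ..
qed

lemma haar_pair_meas:
  fixes m n :: "'g::{topological_group_add,t2_space,second_countable_topology} measure"
  assumes "left_haar_measure m" "left_haar_measure n"
    and F: "F \<in> borel_measurable (borel \<Otimes>\<^sub>M borel)"
  shows "F \<in> borel_measurable (m \<Otimes>\<^sub>M n)"
proof -
  have "sets (m \<Otimes>\<^sub>M n) = sets (borel \<Otimes>\<^sub>M borel)"
    using haar_sets assms by (intro sets_pair_measure_cong) auto
  then show ?thesis using F measurable_cong_sets by blast
qed

lemma haar_identity:
  fixes m n :: "'g::{topological_group_add,t2_space,second_countable_topology} measure"
  assumes lc: "lcsc_group TYPE('g)" and hm: "left_haar_measure m" and hn: "left_haar_measure n"
    and f[measurable]: "f \<in> borel_measurable borel" and E[measurable]: "E \<in> sets borel"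
  shows "(\<integral>\<^sup>+x. f x \<partial>m) * emeasure n E = (\<integral>\<^sup>+y. f (-y) * emeasure m {x. x + y \<in> E} \<partial>n)"
proof -
  interpret P: pair_sigma_finite m n
    using haar_sigma_finite[OF lc] hm hn by (simp add: pair_sigma_finite_def)
  have mb: "F \<in> borel_measurable (m \<Otimes>\<^sub>M n)" if "F \<in> borel_measurable (borel \<Otimes>\<^sub>M borel)" for F :: "_ \<Rightarrow> ennreal"
    using haar_pair_meas[OF hm hn that] .
  have sm: "sets m = sets borel" "sets n = sets borel" using hm hn by (simp_all add: haar_sets)
  have sp: "space m = UNIV" "space n = UNIV" using hm hn by (simp_all add: haar_space)
  have Fub: "(\<integral>\<^sup>+ y. (\<integral>\<^sup>+ x. H x y \<partial>m) \<partial>n) = (\<integral>\<^sup>+ x. (\<integral>\<^sup>+ y. H x y \<partial>n) \<partial>m)"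
    if "case_prod H \<in> borel_measurable (borel \<Otimes>\<^sub>M borel)" for H :: "_ \<Rightarrow> _ \<Rightarrow> ennreal"
    using P.Fubini'[OF mb[OF that]] .
  define H1 where "H1 = (\<lambda>u v. f (-v + u) * indicator E v)"
  have H1m: "case_prod H1 \<in> borel_measurable (borel \<Otimes>\<^sub>M borel)" unfolding H1_def by measurable
  have "(\<integral>\<^sup>+x. f x \<partial>m) * emeasure n E = (\<integral>\<^sup>+x. (\<integral>\<^sup>+y. f x * indicator E y \<partial>n) \<partial>m)"
    using sm by (simp add: nn_integral_cmult nn_integral_multc)
  also have "\<dots> = (\<integral>\<^sup>+y. (\<integral>\<^sup>+x. f x * indicator E y \<partial>m) \<partial>n)"
    by (rule Fub[symmetric]) measurable
  also have "\<dots> = (\<integral>\<^sup>+y. (\<integral>\<^sup>+x. H1 (y + x) y \<partial>m) \<partial>n)"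
    unfolding H1_def by (simp add: add.assoc[symmetric])
  also have "\<dots> = (\<integral>\<^sup>+y. (\<integral>\<^sup>+x. H1 x y \<partial>m) \<partial>n)"
  proof (rule nn_integral_cong)
    fix y
    show "(\<integral>\<^sup>+x. H1 (y + x) y \<partial>m) = (\<integral>\<^sup>+x. H1 x y \<partial>m)"
      by (rule haar_nn_left[OF hm]) (unfold H1_def, measurable)
  qed
  also have "\<dots> = (\<integral>\<^sup>+x. (\<integral>\<^sup>+y. H1 x y \<partial>n) \<partial>m)"
    by (rule Fub[OF H1m])
  also have "\<dots> = (\<integral>\<^sup>+x. (\<integral>\<^sup>+y. H1 x (x + y) \<partial>n) \<partial>m)"
  proof (rule nn_integral_cong)
    fix x
    show "(\<integral>\<^sup>+y. H1 x y \<partial>n) = (\<integral>\<^sup>+y. H1 x (x + y) \<partial>n)"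
      by (rule haar_nn_left[OF hn, symmetric]) (unfold H1_def, measurable)
  qed
  also have "\<dots> = (\<integral>\<^sup>+x. (\<integral>\<^sup>+y. f (-y) * indicator E (x + y) \<partial>n) \<partial>m)"
    unfolding H1_def by (simp add: minus_add add.assoc)
  also have "\<dots> = (\<integral>\<^sup>+y. (\<integral>\<^sup>+x. f (-y) * indicator E (x + y) \<partial>m) \<partial>n)"
    by (rule Fub[symmetric]) measurable
  also have "\<dots> = (\<integral>\<^sup>+y. f (-y) * emeasure m {x. x + y \<in> E} \<partial>n)"
  proof (rule nn_integral_cong)
    fix y
    have "{x. x + y \<in> E} = (\<lambda>x. x + y) -` E \<inter> space m" using sp by auto
    moreover have "(\<lambda>x. x + y) -` E \<inter> space m \<in> sets m"
      using sm by (intro measurable_sets[of _ m borel]) (auto simp: measurable_cong_sets[OF sm(1) refl])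
    ultimately have "emeasure m {x. x + y \<in> E} = (\<integral>\<^sup>+x. indicator E (x + y) \<partial>m)"
      by (simp add: nn_integral_indicator[symmetric] del: nn_integral_indicator)
        (auto intro!: nn_integral_cong simp: indicator_def)
    then show "(\<integral>\<^sup>+x. f (-y) * indicator E (x + y) \<partial>m) = f (-y) * emeasure m {x. x + y \<in> E}"
      by (simp add: nn_integral_cmult sm measurable_cong_sets[OF sm(1) refl])
  qed
  finally show ?thesis .
qed

lemma haar_translate_bounds:
  fixes m :: "'g::{topological_group_add,t2_space,second_countable_topology} measure"
  assumes hm: "left_haar_measure m" and K: "compact K" and U: "open U" "0 \<in> U" "U \<subseteq> K"
  shows "0 < emeasure m {x. x + y \<in> K}" "emeasure m {x. x + y \<in> K} < \<infinity>"
proof -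
  have eq: "{x. x + y \<in> K} = (\<lambda>x. x + -y) ` K"
  proof (rule set_eqI, rule iffI)
    fix x assume "x \<in> {x. x + y \<in> K}"
    then have "x + y \<in> K" by simp
    moreover have "x = (x + y) + -y" by (simp add: add.assoc)
    ultimately show "x \<in> (\<lambda>x. x + -y) ` K" by blast
  next
    fix x assume "x \<in> (\<lambda>x. x + -y) ` K"
    then obtain k where "k \<in> K" "x = k + -y" by blast
    then show "x \<in> {x. x + y \<in> K}" by (simp add: add.assoc)
  qed
  have c: "compact {x. x + y \<in> K}" unfolding eq
    by (rule compact_continuous_image[OF _ K]) (intro continuous_intros)
  then show "emeasure m {x. x + y \<in> K} < \<infinity>" using hm unfolding left_haar_measure_def by blast
  have "continuous_on UNIV (\<lambda>x. x + y)" by (intro continuous_intros)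
  then have o: "open ((\<lambda>x. x + y) -` U)" using U(1) by (simp add: continuous_on_open_vimage)
  have ne: "(\<lambda>x. x + y) -` U \<noteq> {}" proof
    assume "(\<lambda>x. x + y) -` U = {}"
    moreover have "-y \<in> (\<lambda>x. x + y) -` U" using U(2) by simp
    ultimately show False by blast
  qed
  have pos: "\<forall>U. open U \<and> U \<noteq> {} \<longrightarrow> 0 < emeasure m U" using hm unfolding left_haar_measure_def by blast
  have "0 < emeasure m ((\<lambda>x. x + y) -` U)" using pos[rule_format, OF conjI[OF o ne]] .
  also have "\<dots> \<le> emeasure m {x. x + y \<in> K}"
    using U(3) c o hm by (intro emeasure_mono) (auto simp: haar_sets compact_imp_closed)
  finally show "0 < emeasure m {x. x + y \<in> K}" .
qed

lemma haar_unique: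
  fixes m n :: "'g::{topological_group_add,t2_space,second_countable_topology} measure"
  assumes lc: "lcsc_group TYPE('g)" and hm: "left_haar_measure m" and hn: "left_haar_measure n"
  shows "\<exists>c::ennreal. 0 < c \<and> c < \<infinity> \<and> (\<forall>A\<in>sets borel. emeasure n A = c * emeasure m A)"
proof -
  obtain U K where UK: "open U" "compact K" "(0::'g) \<in> U" "U \<subseteq> K"
    using lcsc_nbhd[OF lc, of 0] by blast
  have Kb[measurable]: "K \<in> sets borel" using UK by (simp add: compact_imp_closed)
  define M where "M y = emeasure m {x. x + y \<in> K}" for y
  have Mpos: "0 < M y" "M y < \<infinity>" for y
    unfolding M_def using haar_translate_bounds[OF hm UK(2,1,3,4)] by auto
  interpret ms: sigma_finite_measure m using haar_sigma_finite[OF lc hm] .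
  have Mm[measurable]: "M \<in> borel_measurable borel"
  proof -
    let ?Q = "{p :: 'g \<times> 'g. snd p + fst p \<in> K}"
    have "?Q \<in> sets (borel \<Otimes>\<^sub>M borel)"
    proof -
      have "(\<lambda>p::'g\<times>'g. snd p + fst p) \<in> borel_measurable (borel \<Otimes>\<^sub>M borel)" by measurable
      from measurable_sets[OF this Kb] show ?thesis by (simp add: vimage_def space_pair_measure)
    qed
    then have "?Q \<in> sets (borel \<Otimes>\<^sub>M m)"
      using hm by (simp add: haar_sets cong: sets_pair_measure_cong)
    from ms.measurable_emeasure_Pair[OF this] show ?thesis
      unfolding M_def by (simp add: vimage_def)
  qed
  have key: "emeasure n A = (emeasure n K / emeasure m K) * emeasure m A" if A[measurable]: "A \<in> sets borel" for A
  proof -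
    define f where "f z = indicator A (-z) / M (-z)" for z :: 'g
    have fm[measurable]: "f \<in> borel_measurable borel" unfolding f_def by measurable
    have red: "f (-y) * M y = indicator A y" for y
    proof -
      have "M y \<noteq> 0" "M y \<noteq> top" using Mpos[of y] by auto
      then have "indicator A y / M y * M y = indicator A y"
        by (simp add: ennreal_divide_times less_top)
      then show ?thesis unfolding f_def by simp
    qed
    have "emeasure n A = (\<integral>\<^sup>+y. indicator A y \<partial>n)" using hn by (simp add: haar_sets)
    also have "\<dots> = (\<integral>\<^sup>+x. f x \<partial>m) * emeasure n K"
      using haar_identity[OF lc hm hn fm Kb] red unfolding M_def by simp
    finally have 1: "emeasure n A = (\<integral>\<^sup>+x. f x \<partial>m) * emeasure n K" .
    have "emeasure m A = (\<integral>\<^sup>+y. indicator A y \<partial>m)" using hm by (simp add: haar_sets)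
    also have "\<dots> = (\<integral>\<^sup>+x. f x \<partial>m) * emeasure m K"
      using haar_identity[OF lc hm hm fm Kb] red unfolding M_def by simp
    finally have 2: "emeasure m A = (\<integral>\<^sup>+x. f x \<partial>m) * emeasure m K" .
    have "emeasure m K = M 0" unfolding M_def by simp
    then have mK: "emeasure m K \<noteq> 0" "emeasure m K \<noteq> \<infinity>" using Mpos[of 0] by auto
    have "emeasure n K / emeasure m K * ((\<integral>\<^sup>+x. f x \<partial>m) * emeasure m K)
        = (\<integral>\<^sup>+x. f x \<partial>m) * (emeasure m K * emeasure n K / emeasure m K)"
      by (simp add: ennreal_divide_times ennreal_times_divide mult_ac)
    also have "\<dots> = (\<integral>\<^sup>+x. f x \<partial>m) * emeasure n K"
      using mK by (simp add: mult.commute[of "emeasure m K"] mult_divide_eq_ennreal)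
    finally show ?thesis unfolding 1 2 ..
  qed
  have nK: "0 < emeasure n K" "emeasure n K < \<infinity>"
    using haar_translate_bounds[OF hn UK(2,1,3,4), of 0] by auto
  have mK: "0 < emeasure m K" "emeasure m K < \<infinity>"
    using haar_translate_bounds[OF hm UK(2,1,3,4), of 0] by auto
  have "0 < emeasure n K / emeasure m K" using nK mK
    by (simp add: ennreal_zero_less_divide)
  moreover have "emeasure n K / emeasure m K < \<infinity>" using nK mK
    by (auto simp add: ennreal_divide_eq_top_iff less_top[symmetric])
  ultimately show ?thesis using key by blast
qed

lemma haar_right_distr:
  fixes \<mu> :: "'g::{topological_group_add,t2_space,second_countable_topology} measure"
  assumes h: "left_haar_measure \<mu>"
  shows "left_haar_measure (distr \<mu> borel (\<lambda>x. x + g))"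
proof -
  have meas: "(\<lambda>x. x + g) \<in> measurable \<mu> borel"
    using haar_sets[OF h] measurable_cong_sets[OF haar_sets[OF h] refl] by (auto intro: borel_measurable_continuous_onI continuous_intros)
  have pre: "(\<lambda>x. x + g) -` A \<inter> space \<mu> = {x. x + g \<in> A}" for A using haar_space[OF h] by auto
  have em: "emeasure (distr \<mu> borel (\<lambda>x. x + g)) A = emeasure \<mu> {x. x + g \<in> A}" if "A \<in> sets borel" for A
    using that meas by (simp add: emeasure_distr pre)
  have imgK: "{x. x + g \<in> K} = (\<lambda>x. x + -g) ` K" for K
  proof (rule set_eqI, rule iffI)
    fix x assume "x \<in> {x. x + g \<in> K}"
    then have "x + g \<in> K" by simp
    moreover have "x = (x + g) + -g" by (simp add: add.assoc)
    ultimately show "x \<in> (\<lambda>x. x + -g) ` K" by blast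
  next
    fix x assume "x \<in> (\<lambda>x. x + -g) ` K"
    then obtain k where "k \<in> K" "x = k + -g" by blast
    then show "x \<in> {x. x + g \<in> K}" by (simp add: add.assoc)
  qed
  have inv: "\<forall>A. A \<in> sets borel \<longrightarrow> emeasure \<mu> ((+) h ` A) = emeasure \<mu> A" for h
    using h unfolding left_haar_measure_def by blast
  have fin: "\<forall>K. compact K \<longrightarrow> emeasure \<mu> K < \<infinity>" using h unfolding left_haar_measure_def by blast
  have pos: "\<forall>U. open U \<and> U \<noteq> {} \<longrightarrow> 0 < emeasure \<mu> U" using h unfolding left_haar_measure_def by blast
  show ?thesis unfolding left_haar_measure_def
  proof (intro conjI allI impI)
    show "sets (distr \<mu> borel (\<lambda>x. x + g)) = sets borel" by simp
  next
    fix k :: 'g and A :: "'g set" assume A: "A \<in> sets borel"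
    have c: "continuous_on UNIV (\<lambda>x. -k + x)" by (rule continuous_on_add[OF continuous_on_const continuous_on_id])
    have kA: "(+) k ` A \<in> sets borel"
    proof -
      have "(+) k ` A = (\<lambda>x. -k + x) -` A" by (auto simp: image_iff) (metis add_minus_cancel)
      then show ?thesis using measurable_sets[OF borel_measurable_continuous_onI[OF c] A] by simp
    qed
    have Ab: "{x. x + g \<in> A} \<in> sets borel"
    proof -
      have "continuous_on UNIV (\<lambda>x. x + g)" by (intro continuous_intros)
      from measurable_sets[OF borel_measurable_continuous_onI[OF this] A] show ?thesis by (simp add: vimage_def)
    qed
    have "{x. x + g \<in> (+) k ` A} = (+) k ` {x. x + g \<in> A}"
    proof (rule set_eqI, rule iffI)
      fix x assume "x \<in> {x. x + g \<in> (+) k ` A}"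
      then obtain a where a: "a \<in> A" "x + g = k + a" by auto
      have "-k + x + g = a" using a(2) by (metis add.assoc add_minus_cancel)
      then have "-k + x \<in> {x. x + g \<in> A}" using a(1) by simp
      moreover have "x = k + (-k + x)" by (simp add: add.assoc[symmetric])
      ultimately show "x \<in> (+) k ` {x. x + g \<in> A}" by blast
    next
      fix x assume "x \<in> (+) k ` {x. x + g \<in> A}"
      then obtain y where "y + g \<in> A" "x = k + y" by auto
      then show "x \<in> {x. x + g \<in> (+) k ` A}" by (auto simp: add.assoc)
    qed
    then show "emeasure (distr \<mu> borel (\<lambda>x. x + g)) ((+) k ` A) = emeasure (distr \<mu> borel (\<lambda>x. x + g)) A"
      using em[OF kA] em[OF A] inv[of k] Ab by simp
  next
    fix K :: "'g set" assume K: "compact K"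
    have "compact {x. x + g \<in> K}" unfolding imgK
      by (rule compact_continuous_image[OF _ K]) (intro continuous_intros)
    then show "emeasure (distr \<mu> borel (\<lambda>x. x + g)) K < \<infinity>"
      using em[of K] K fin by (simp add: compact_imp_closed)
  next
    fix U :: "'g set" assume U: "open U \<and> U \<noteq> {}"
    have "continuous_on UNIV (\<lambda>x. x + g)" by (intro continuous_intros)
    then have o: "open ((\<lambda>x. x + g) -` U)" using U by (simp add: continuous_on_open_vimage)
    obtain u where "u \<in> U" using U by blast
    then have ne: "(\<lambda>x. x + g) -` U \<noteq> {}" by (metis add.assoc add.left_inverse add_0_right vimageI2 empty_iff)
    have "0 < emeasure \<mu> ((\<lambda>x. x + g) -` U)" using pos[rule_format, OF conjI[OF o ne]] .
    then show "0 < emeasure (distr \<mu> borel (\<lambda>x. x + g)) U"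
      using em[of U] U by (simp add: vimage_def)
  qed
qed

lemma haar_meas_transfer:
  assumes "left_haar_measure \<mu>" "f \<in> measurable borel N"
  shows "f \<in> measurable \<mu> N"
  using assms measurable_cong_sets[OF haar_sets[OF assms(1)] refl] by blast

lemma right_transl_integral:
  fixes \<mu> :: "'g::{topological_group_add,t2_space,second_countable_topology} measure"
  assumes lc: "lcsc_group TYPE('g)" and h: "left_haar_measure \<mu>"
  shows "\<exists>c::ennreal. 0 < c \<and> c < \<infinity> \<and>
    (\<forall>\<phi> \<in> borel_measurable borel. (\<integral>\<^sup>+x. \<phi> (x + g) \<partial>\<mu>) = c * (\<integral>\<^sup>+x. \<phi> x \<partial>\<mu>))"
proof -
  obtain c :: ennreal where c: "0 < c" "c < \<infinity>"
    "\<forall>A\<in>sets borel. emeasure (distr \<mu> borel (\<lambda>x. x + g)) A = c * emeasure \<mu> A"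
    using haar_unique[OF lc h haar_right_distr[OF h, of g]] by blast
  have meas: "(\<lambda>x. x + g) \<in> measurable \<mu> borel"
    by (intro haar_meas_transfer[OF h] borel_measurable_continuous_onI continuous_intros)
  have D: "distr \<mu> borel (\<lambda>x. x + g) = density \<mu> (\<lambda>_. c)"
  proof (rule measure_eqI)
    show "sets (distr \<mu> borel (\<lambda>x. x + g)) = sets (density \<mu> (\<lambda>_. c))" using haar_sets[OF h] by simp
    fix A assume "A \<in> sets (distr \<mu> borel (\<lambda>x. x + g))"
    then have A: "A \<in> sets borel" by simp
    then have A': "A \<in> sets \<mu>" using haar_sets[OF h] by simp
    show "emeasure (distr \<mu> borel (\<lambda>x. x + g)) A = emeasure (density \<mu> (\<lambda>_. c)) A"
      using c(3) A A' by (simp add: emeasure_density nn_integral_cmult_indicator)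
  qed
  have "(\<integral>\<^sup>+x. \<phi> (x + g) \<partial>\<mu>) = c * (\<integral>\<^sup>+x. \<phi> x \<partial>\<mu>)" if \<phi>: "\<phi> \<in> borel_measurable borel" for \<phi>
  proof -
    have \<phi>': "\<phi> \<in> borel_measurable \<mu>" using \<phi> measurable_cong_sets[OF haar_sets[OF h] refl] by blast
    have "(\<integral>\<^sup>+x. \<phi> (x + g) \<partial>\<mu>) = (\<integral>\<^sup>+x. \<phi> x \<partial>distr \<mu> borel (\<lambda>x. x + g))"
      using meas \<phi> by (simp add: nn_integral_distr)
    also have "\<dots> = (\<integral>\<^sup>+x. c * \<phi> x \<partial>\<mu>)" unfolding D using \<phi>' by (simp add: nn_integral_density)
    also have "\<dots> = c * (\<integral>\<^sup>+x. \<phi> x \<partial>\<mu>)" using \<phi>' by (simp add: nn_integral_cmult)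
    finally show ?thesis .
  qed
  then show ?thesis using c by blast
qed

lemma right_transl_local_bound:
  fixes \<mu> :: "'g::{topological_group_add,t2_space,second_countable_topology} measure"
  assumes lc: "lcsc_group TYPE('g)" and h: "left_haar_measure \<mu>"
  shows "\<exists>W B. open W \<and> g0 \<in> W \<and> B < (\<infinity>::ennreal) \<and>
    (\<forall>g\<in>W. \<forall>\<phi> \<in> borel_measurable borel. (\<integral>\<^sup>+x. \<phi> (x + g) \<partial>\<mu>) \<le> B * (\<integral>\<^sup>+x. \<phi> x \<partial>\<mu>))"
proof -
  obtain U K where UK: "open U" "compact K" "(0::'g) \<in> U" "U \<subseteq> K"
    using lcsc_nbhd[OF lc, of 0] by blast
  obtain W C where WC: "open W" "compact C" "(g0::'g) \<in> W" "W \<subseteq> C"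
    using lcsc_nbhd[OF lc, of g0] by blast
  define S where "S = (\<lambda>p. fst p + - snd p) ` (K \<times> C)"
  have cS: "compact S" unfolding S_def
    by (rule compact_continuous_image) (auto intro!: continuous_intros compact_Times UK WC)
  have fin: "\<forall>K. compact K \<longrightarrow> emeasure \<mu> K < \<infinity>" using h unfolding left_haar_measure_def by blast
  have Kpos: "0 < emeasure \<mu> K" "emeasure \<mu> K < \<infinity>"
    using haar_translate_bounds[OF h UK(2,1,3,4), of 0] by simp_all
  have Kb: "K \<in> sets borel" using UK by (simp add: compact_imp_closed)
  define B where "B = emeasure \<mu> S / emeasure \<mu> K"
  have "B < \<infinity>" unfolding B_def using fin cS Kpos
    by (auto simp add: less_top[symmetric] ennreal_divide_eq_top_iff)
  moreover have "(\<integral>\<^sup>+x. \<phi> (x + g) \<partial>\<mu>) \<le> B * (\<integral>\<^sup>+x. \<phi> x \<partial>\<mu>)"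
    if g: "g \<in> W" and \<phi>: "\<phi> \<in> borel_measurable borel" for g \<phi>
  proof -
    obtain c :: ennreal where c: "0 < c" "c < \<infinity>"
      "\<forall>\<phi> \<in> borel_measurable borel. (\<integral>\<^sup>+x. \<phi> (x + g) \<partial>\<mu>) = c * (\<integral>\<^sup>+x. \<phi> x \<partial>\<mu>)"
      using right_transl_integral[OF lc h, of g] by blast
    have ind: "indicator K \<in> borel_measurable (borel :: 'g measure)" using Kb by simp
    have sub: "{x. x + g \<in> K} \<subseteq> S"
    proof
      fix x assume "x \<in> {x. x + g \<in> K}"
      then have "(x + g, g) \<in> K \<times> C" using g WC by auto
      moreover have "x = fst (x + g, g) + - snd (x + g, g)" by (simp add: add.assoc)
      ultimately show "x \<in> S" unfolding S_def by blast
    qed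
    have Sb: "S \<in> sets \<mu>" using cS h by (simp add: haar_sets compact_imp_closed)
    have setb: "{x. x + g \<in> K} \<in> sets \<mu>"
    proof -
      have "continuous_on UNIV (\<lambda>x. x + g)" by (intro continuous_intros)
      from measurable_sets[OF borel_measurable_continuous_onI[OF this] Kb] show ?thesis
        using h by (simp add: vimage_def haar_sets)
    qed
    have "c * emeasure \<mu> K = (\<integral>\<^sup>+x. indicator K (x + g) \<partial>\<mu>)"
      using c(3) ind Kb h by (simp add: haar_sets)
    also have "\<dots> = emeasure \<mu> {x. x + g \<in> K}"
      using setb by (simp add: nn_integral_indicator[symmetric] del: nn_integral_indicator)
        (auto intro!: nn_integral_cong simp: indicator_def)
    also have "\<dots> \<le> emeasure \<mu> S" using sub Sb by (rule emeasure_mono)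
    finally have "c * emeasure \<mu> K \<le> emeasure \<mu> S" .
    then have "c * emeasure \<mu> K / emeasure \<mu> K \<le> B" unfolding B_def
      by (rule divide_right_mono_ennreal)
    then have "c \<le> B" using Kpos by (simp add: mult_divide_eq_ennreal less_top[symmetric])
    then have "c * (\<integral>\<^sup>+x. \<phi> x \<partial>\<mu>) \<le> B * (\<integral>\<^sup>+x. \<phi> x \<partial>\<mu>)" by (rule mult_right_mono) simp
    then show ?thesis using c(3) \<phi> by simp
  qed
  ultimately show ?thesis using WC by blast
qed

lemma rep_local_bound:
  fixes \<pi>0 :: "'g::{topological_group_add,t2_space,second_countable_topology} \<Rightarrow> 'v::banach \<Rightarrow> 'v"
  assumes lc: "lcsc_group TYPE('g)" and r: "cont_rep \<pi>0"
  shows "\<exists>W M. open W \<and> g0 \<in> W \<and> 0 < M \<and> (\<forall>g\<in>W. \<forall>v. norm (\<pi>0 g v) \<le> M * norm v)"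
proof -
  obtain W C where WC: "open W" "compact C" "(g0::'g) \<in> W" "W \<subseteq> C"
    using lcsc_nbhd[OF lc, of g0] by blast
  have bl: "bounded_linear (\<pi>0 g)" for g using r unfolding cont_rep_def by blast
  have cont: "continuous_on UNIV (\<lambda>g. \<pi>0 g v)" for v using r unfolding cont_rep_def by blast
  define E where "E n = {v. \<forall>g\<in>C. norm (\<pi>0 g v) \<le> real n}" for n :: nat
  have clE: "closed (E n)" for n
  proof -
    have "E n = (\<Inter>g\<in>C. {v. norm (\<pi>0 g v) \<le> real n})" unfolding E_def by auto
    moreover have "closed {v. norm (\<pi>0 g v) \<le> real n}" for g
      using bl[of g] by (intro closed_Collect_le continuous_intros linear_continuous_on) (auto simp: bounded_linear.linear)
    ultimately show ?thesis by auto
  qed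
  have cover: "\<Union>(range E) = UNIV"
  proof -
    have "v \<in> \<Union>(range E)" for v
    proof -
      have "compact ((\<lambda>g. \<pi>0 g v) ` C)"
        using cont[of v] WC(2) by (intro compact_continuous_image) (auto intro: continuous_on_subset)
      then obtain a where a: "\<forall>x\<in>(\<lambda>g. \<pi>0 g v) ` C. norm x \<le> a"
        using compact_imp_bounded bounded_iff by metis
      obtain n :: nat where "a \<le> real n" using real_arch_simple by blast
      then have "v \<in> E n" using a unfolding E_def by force
      then show ?thesis by blast
    qed
    then show ?thesis by blast
  qed
  have "\<exists>n. interior (E n) \<noteq> {}"
  proof (rule ccontr)
    assume "\<not> (\<exists>n. interior (E n) \<noteq> {})"
    then have "euclidean interior_of \<Union>(range E) = {}"
      by (intro Baire_category_alt)
        (auto simp: completely_metrizable_space_euclidean clE closed_closedin[symmetric])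
    then show False using cover by simp
  qed
  then obtain n v0 where "v0 \<in> interior (E n)" by blast
  then obtain r0 where r0: "r0 > 0" "ball v0 r0 \<subseteq> E n"
    using open_contains_ball by (metis interior_subset open_interior subset_trans)
  have small: "norm (\<pi>0 g w) \<le> 2 * real n" if "g \<in> C" "norm w < r0" for g w
  proof -
    have "v0 + w \<in> E n" "v0 \<in> E n" using r0 that by (auto simp: dist_norm)
    then have "norm (\<pi>0 g (v0 + w)) \<le> real n" "norm (\<pi>0 g v0) \<le> real n"
      using that unfolding E_def by auto
    moreover have "\<pi>0 g w = \<pi>0 g (v0 + w) - \<pi>0 g v0"
      using bl[of g] by (simp add: linear_simps)
    ultimately show ?thesis by (smt (verit) norm_triangle_ineq4)
  qed
  define M where "M = 4 * real n / r0 + 1"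
  have Mpos: "0 < M" unfolding M_def using r0 by (simp add: add_nonneg_pos)
  have "norm (\<pi>0 g v) \<le> M * norm v" if g: "g \<in> W" for g v
  proof (cases "v = 0")
    case True
    then show ?thesis using bl[of g] by (simp add: linear_simps)
  next
    case False
    define t where "t = r0 / (2 * norm v)"
    have t: "t > 0" unfolding t_def using False r0 by simp
    have "norm (t *\<^sub>R v) = r0 / 2" unfolding t_def using False r0 by simp
    then have "norm (t *\<^sub>R v) < r0" using r0 by simp
    then have "norm (\<pi>0 g (t *\<^sub>R v)) \<le> 2 * real n" using small g WC by auto
    then have "t * norm (\<pi>0 g v) \<le> 2 * real n" using bl[of g] t by (simp add: linear_simps)
    then have "norm (\<pi>0 g v) \<le> 2 * real n / t" using t by (simp add: field_simps)
    also have "\<dots> = 4 * real n / r0 * norm v" unfolding t_def using r0 False by (simp add: field_simps)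
    also have "\<dots> \<le> M * norm v" unfolding M_def by (simp add: distrib_right)
    finally show ?thesis .
  qed
  then show ?thesis using WC Mpos by blast
qed

definition Nn :: "'a measure \<Rightarrow> real \<Rightarrow> ('a \<Rightarrow> 'v::real_normed_vector) \<Rightarrow> ennreal" where
  "Nn M p h = (\<integral>\<^sup>+x. ennreal (norm (h x) powr p) \<partial>M)"

lemma Lp_iff:
  fixes h :: "'a \<Rightarrow> 'v::{banach,second_countable_topology}"
  shows "h \<in> Lp M p \<longleftrightarrow> h \<in> borel_measurable M \<and> Nn M p h < \<infinity>"
proof
  assume "h \<in> Lp M p"
  then have h: "h \<in> borel_measurable M" "integrable M (\<lambda>x. norm (h x) powr p)" unfolding Lp_def by auto
  then show "h \<in> borel_measurable M \<and> Nn M p h < \<infinity>"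
    unfolding Nn_def integrable_iff_bounded by simp
next
  assume h: "h \<in> borel_measurable M \<and> Nn M p h < \<infinity>"
  then have [measurable]: "h \<in> borel_measurable M" by simp
  have "(\<lambda>x. norm (h x) powr p) \<in> borel_measurable M" by measurable
  then have "integrable M (\<lambda>x. norm (h x) powr p)"
    using h unfolding Nn_def integrable_iff_bounded by simp
  then show "h \<in> Lp M p" using h unfolding Lp_def by simp
qed

lemma Lp_norm_Nn:
  fixes h :: "'a \<Rightarrow> 'v::{banach,second_countable_topology}"
  assumes "h \<in> borel_measurable M"
  shows "Lp_norm M p h = enn2real (Nn M p h) powr (1/p)"
  unfolding Lp_norm_def Nn_def using assms by (subst integral_eq_nn_integral) auto

lemma Nn_cong_AE:
  assumes "AE x in M. h1 x = h2 x"
  shows "Nn M p h1 = Nn M p h2"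
  unfolding Nn_def using assms by (intro nn_integral_cong_AE) auto

lemma powr_add_bound:
  fixes a b :: "'v::real_normed_vector"
  assumes p: "p > 0"
  shows "norm (a + b) powr p \<le> 2 powr p * (norm a powr p + norm b powr p)"
proof -
  define m where "m = max (norm a) (norm b)"
  have "norm (a + b) \<le> 2 * m" unfolding m_def by (smt (verit) norm_triangle_ineq)
  then have "norm (a + b) powr p \<le> (2 * m) powr p" using p by (intro powr_mono2) auto
  also have "\<dots> = 2 powr p * m powr p" unfolding m_def by (simp add: powr_mult)
  also have "m powr p \<le> norm a powr p + norm b powr p" unfolding m_def by (simp add: max_def)
  then have "2 powr p * m powr p \<le> 2 powr p * (norm a powr p + norm b powr p)" by simp
  finally show ?thesis .
qed

lemma Nn_add:
  fixes a b :: "'a \<Rightarrow> 'v::{banach,second_countable_topology}"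
  assumes p: "p > 0" and [measurable]: "a \<in> borel_measurable M" "b \<in> borel_measurable M"
  shows "Nn M p (\<lambda>x. a x + b x) \<le> ennreal (2 powr p) * (Nn M p a + Nn M p b)"
proof -
  have "Nn M p (\<lambda>x. a x + b x) \<le> (\<integral>\<^sup>+x. ennreal (2 powr p) * (ennreal (norm (a x) powr p) + ennreal (norm (b x) powr p)) \<partial>M)"
    unfolding Nn_def
  proof (intro nn_integral_mono)
    fix x
    have "norm (a x + b x) powr p \<le> 2 powr p * (norm (a x) powr p + norm (b x) powr p)"
      by (rule powr_add_bound[OF p])
    then show "ennreal (norm (a x + b x) powr p) \<le> ennreal (2 powr p) * (ennreal (norm (a x) powr p) + ennreal (norm (b x) powr p))"
      by (simp add: ennreal_mult[symmetric] ennreal_plus[symmetric] del: ennreal_plus)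
  qed
  also have "\<dots> = ennreal (2 powr p) * (Nn M p a + Nn M p b)"
    unfolding Nn_def by (simp add: nn_integral_cmult nn_integral_add)
  finally show ?thesis .
qed

lemma Nn_uminus: "Nn M p (\<lambda>x. - a x) = Nn M p a"
  unfolding Nn_def by simp

lemma Nn_diff:
  fixes a b :: "'a \<Rightarrow> 'v::{banach,second_countable_topology}"
  assumes p: "p > 0" and [measurable]: "a \<in> borel_measurable M" "b \<in> borel_measurable M"
  shows "Nn M p (\<lambda>x. a x - b x) \<le> ennreal (2 powr p) * (Nn M p a + Nn M p b)"
  using Nn_add[OF p, of a M "\<lambda>x. - b x"] by (simp add: Nn_uminus)

lemma Nn_scale:
  fixes h :: "'a \<Rightarrow> 'v::{banach,second_countable_topology}"
  assumes "p > 0" and [measurable]: "h \<in> borel_measurable M"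
  shows "Nn M p (\<lambda>x. s *\<^sub>R h x) = ennreal (\<bar>s\<bar> powr p) * Nn M p h"
  unfolding Nn_def using assms
  by (simp add: powr_mult ennreal_mult nn_integral_cmult)

lemma Nn_zero_AE:
  fixes h :: "'a \<Rightarrow> 'v::{banach,second_countable_topology}"
  assumes p: "p > 0" and [measurable]: "h \<in> borel_measurable M" and z: "Nn M p h = 0"
  shows "AE x in M. h x = 0"
proof -
  have "AE x in M. ennreal (norm (h x) powr p) = 0"
    using z unfolding Nn_def by (subst nn_integral_0_iff_AE[symmetric]) auto
  then show ?thesis by eventually_elim (use p in \<open>auto simp: ennreal_eq_0_iff\<close>)
qed

lemma two_pow_powr: "((2::real) ^ k * y) powr p = (2 powr p) ^ k * y powr p" if "y \<ge> 0"
  using that by (simp add: powr_mult powr_realpow[symmetric] powr_powr mult.commute powr_power)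

lemma finite_sum_powr_bound:
  fixes y :: "nat \<Rightarrow> real"
  assumes y: "\<And>k. y k \<ge> 0" and p: "p > 0"
  shows "(\<Sum>k<n. y k) powr p \<le> 2 powr p * (\<Sum>k<n. (2 powr p) ^ k * y k powr p)"
proof -
  define S where "S = (\<Sum>k<n. (2 powr p) ^ k * y k powr p)"
  have S0: "S \<ge> 0" unfolding S_def by (intro sum_nonneg) auto
  have yk: "y k \<le> S powr (1/p) * (1/2) ^ k" if "k < n" for k
  proof -
    have "((2::real) ^ k * y k) powr p = (2 powr p) ^ k * y k powr p" using y by (rule two_pow_powr)
    also have "\<dots> \<le> S" unfolding S_def using that
      by (intro member_le_sum) auto
    finally have "((2::real) ^ k * y k) powr p \<le> S" .
    then have "(((2::real) ^ k * y k) powr p) powr (1/p) \<le> S powr (1/p)"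
      using p by (intro powr_mono2) auto
    then have "2 ^ k * y k \<le> S powr (1/p)" using p y by (simp add: powr_powr)
    then show ?thesis by (simp add: field_simps power_one_over)
  qed
  have "(\<Sum>k<n. y k) \<le> (\<Sum>k<n. S powr (1/p) * (1/2) ^ k)" using yk by (intro sum_mono) auto
  also have "\<dots> = S powr (1/p) * (\<Sum>k<n. (1/2) ^ k)" by (simp add: sum_distrib_left)
  also have "(\<Sum>k<n. (1/2::real) ^ k) \<le> 2"
  proof -
    have "(\<Sum>k<n. (1/2::real) ^ k) = (1 - (1/2) ^ n) / (1 - 1/2)" by (simp add: sum_gp_strict)
    also have "\<dots> \<le> 2" by simp
    finally show ?thesis .
  qed
  then have "S powr (1/p) * (\<Sum>k<n. (1/2::real) ^ k) \<le> S powr (1/p) * 2" by (intro mult_left_mono) auto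
  finally have le: "(\<Sum>k<n. y k) \<le> 2 * S powr (1/p)" by simp
  have "(\<Sum>k<n. y k) powr p \<le> (2 * S powr (1/p)) powr p"
    using le p y by (intro powr_mono2) (auto intro: sum_nonneg)
  also have "\<dots> = 2 powr p * S" using S0 p by (simp add: powr_mult powr_powr)
  finally show ?thesis unfolding S_def .
qed

lemma series_powr_bound:
  fixes y :: "nat \<Rightarrow> real"
  assumes y: "\<And>k. y k \<ge> 0" and p: "p > 0" and s: "summable y"
  shows "ennreal (suminf y powr p) \<le> ennreal (2 powr p) * (\<Sum>k. ennreal ((2 powr p) ^ k * y k powr p))"
proof -
  have lim: "(\<lambda>n. ennreal ((\<Sum>k<n. y k) powr p)) \<longlonglongrightarrow> ennreal (suminf y powr p)"
  proof (intro tendsto_ennrealI tendsto_powr')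
    show "(\<lambda>n. \<Sum>k<n. y k) \<longlonglongrightarrow> suminf y" using s by (rule summable_LIMSEQ)
  qed (use p y in \<open>auto intro!: sum_nonneg always_eventually\<close>)
  show ?thesis
  proof (rule LIMSEQ_le_const2[OF lim], intro exI allI impI)
    fix n
    have "ennreal ((\<Sum>k<n. y k) powr p) \<le> ennreal (2 powr p * (\<Sum>k<n. (2 powr p) ^ k * y k powr p))"
      by (intro ennreal_leI finite_sum_powr_bound y p)
    also have "\<dots> = ennreal (2 powr p) * (\<Sum>k<n. ennreal ((2 powr p) ^ k * y k powr p))"
      by (subst sum_ennreal) (auto simp: ennreal_mult sum_nonneg)
    also have "\<dots> \<le> ennreal (2 powr p) * (\<Sum>k. ennreal ((2 powr p) ^ k * y k powr p))"
      by (intro mult_left_mono sum_le_suminf) auto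
    finally show "ennreal ((\<Sum>k<n. y k) powr p) \<le> ennreal (2 powr p) * (\<Sum>k. ennreal ((2 powr p) ^ k * y k powr p))" .
  qed
qed

lemma Lp_series:
  fixes a :: "nat \<Rightarrow> 'a \<Rightarrow> 'v::{banach,second_countable_topology}"
  assumes p: "p > 0" and am[measurable]: "\<And>k. a k \<in> borel_measurable M"
    and bd: "\<And>k. Nn M p (a k) \<le> ennreal (A * d ^ k)"
    and A: "A \<ge> 0" and d: "d \<ge> 0" and q: "2 powr p * d < 1"
  shows "AE x in M. summable (\<lambda>k. norm (a k x))"
    and "Nn M p (\<lambda>x. (\<Sum>k. a k x) - (\<Sum>k<K. a k x)) \<le> ennreal (2 powr p * (A * d ^ K / (1 - 2 powr p * d)))"
proof -
  define r where "r = 2 powr p"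
  have r0: "r > 0" unfolding r_def by simp
  define G where "G K x = (\<Sum>j. ennreal (r ^ j * norm (a (j + K) x) powr p))" for K x
  have Gm[measurable]: "G K \<in> borel_measurable M" for K unfolding G_def by measurable
  have intG: "(\<integral>\<^sup>+x. G K x \<partial>M) \<le> ennreal (A * d ^ K / (1 - r * d))" for K
  proof -
    have "(\<integral>\<^sup>+x. G K x \<partial>M) = (\<Sum>j. \<integral>\<^sup>+x. ennreal (r ^ j * norm (a (j + K) x) powr p) \<partial>M)"
      unfolding G_def by (rule nn_integral_suminf) measurable
    also have "\<dots> = (\<Sum>j. ennreal (r ^ j) * Nn M p (a (j + K)))"
      unfolding Nn_def using r0 by (simp add: ennreal_mult nn_integral_cmult)
    also have "\<dots> \<le> (\<Sum>j. ennreal (r ^ j) * ennreal (A * d ^ (j + K)))"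
      by (intro suminf_le mult_left_mono bd) auto
    also have "\<dots> = (\<Sum>j. ennreal ((A * d ^ K) * (r * d) ^ j))"
      using r0 A d by (simp add: ennreal_mult[symmetric] power_add power_mult_distrib mult_ac)
    also have "\<dots> = ennreal (A * d ^ K / (1 - r * d))"
    proof -
      have "(\<lambda>j. (A * d ^ K) * (r * d) ^ j) sums ((A * d ^ K) * (1 / (1 - r * d)))"
        using q r0 d unfolding r_def by (intro sums_mult geometric_sums) auto
      then have "(\<lambda>j. ennreal ((A * d ^ K) * (r * d) ^ j)) sums ennreal ((A * d ^ K) * (1 / (1 - r * d)))"
        using A d r0 q unfolding r_def by (subst sums_ennreal) auto
      then show ?thesis by (simp add: sums_unique[symmetric])
    qed
    finally show ?thesis .
  qed
  have fin: "AE x in M. G 0 x \<noteq> \<infinity>"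
    by (rule nn_integral_PInf_AE[OF Gm]) (use intG[of 0] in \<open>auto simp: top_unique\<close>)
  have summ: "summable (\<lambda>k. norm (a k x))" if Gx: "G 0 x \<noteq> \<infinity>" for x
  proof -
    define g where "g = enn2real (G 0 x)"
    have "norm (a k x) \<le> g powr (1/p) * (1/2) ^ k" for k
    proof -
      have "ennreal (r ^ k * norm (a k x) powr p) \<le> G 0 x"
        unfolding G_def using sum_le_suminf[OF summableI, of "{k}" "\<lambda>j. ennreal (r ^ j * norm (a (j + 0) x) powr p)"] by simp
      also have "G 0 x = ennreal g" unfolding g_def using Gx ennreal_enn2real[of "G 0 x"] by (simp add: less_top)
      finally have "ennreal (r ^ k * norm (a k x) powr p) \<le> ennreal g" .
      moreover have "g \<ge> 0" unfolding g_def by simp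
      ultimately have "r ^ k * norm (a k x) powr p \<le> g" by (rule ennreal_le_iff[THEN iffD1, rotated])
      then have "(2 ^ k * norm (a k x)) powr p \<le> g" using two_pow_powr[of "norm (a k x)" k p] unfolding r_def by simp
      then have "((2 ^ k * norm (a k x)) powr p) powr (1/p) \<le> g powr (1/p)"
        using p by (intro powr_mono2) auto
      then have "2 ^ k * norm (a k x) \<le> g powr (1/p)" using p by (simp add: powr_powr)
      then have "norm (a k x) \<le> g powr (1/p) / 2 ^ k" by (simp add: pos_le_divide_eq mult.commute)
      then show ?thesis by (metis power_one_over times_divide_eq_right mult_1_right)
    qed
    note bnd = this
    show ?thesis
      by (rule summable_comparison_test'[where g="\<lambda>k. g powr (1/p) * (1/2) ^ k" and N=0]) (use bnd in \<open>auto intro!: summable_mult\<close>)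
  qed
  show "AE x in M. summable (\<lambda>k. norm (a k x))" using fin by eventually_elim (rule summ)
  have pw: "ennreal (norm ((\<Sum>k. a k x) - (\<Sum>k<K. a k x)) powr p) \<le> ennreal r * G K x"
    if Gx: "G 0 x \<noteq> \<infinity>" for x
  proof -
    have sn: "summable (\<lambda>k. norm (a k x))" by (rule summ[OF Gx])
    then have sa: "summable (\<lambda>k. a k x)" by (rule summable_norm_cancel)
    have snK: "summable (\<lambda>j. norm (a (j + K) x))" using sn by (rule summable_ignore_initial_segment)
    have eq: "(\<Sum>k. a k x) - (\<Sum>k<K. a k x) = (\<Sum>j. a (j + K) x)"
      using suminf_split_initial_segment[OF sa, of K] by simp
    have "norm ((\<Sum>k. a k x) - (\<Sum>k<K. a k x)) \<le> (\<Sum>j. norm (a (j + K) x))"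
      unfolding eq by (rule summable_norm[OF snK])
    then have "norm ((\<Sum>k. a k x) - (\<Sum>k<K. a k x)) powr p \<le> (\<Sum>j. norm (a (j + K) x)) powr p"
      using p by (intro powr_mono2) auto
    then have "ennreal (norm ((\<Sum>k. a k x) - (\<Sum>k<K. a k x)) powr p) \<le> ennreal ((\<Sum>j. norm (a (j + K) x)) powr p)"
      by (rule ennreal_leI)
    also have "\<dots> \<le> ennreal (2 powr p) * (\<Sum>j. ennreal ((2 powr p) ^ j * norm (a (j + K) x) powr p))"
      by (rule series_powr_bound[OF _ p snK]) simp
    finally show ?thesis unfolding G_def r_def .
  qed
  have "Nn M p (\<lambda>x. (\<Sum>k. a k x) - (\<Sum>k<K. a k x)) \<le> (\<integral>\<^sup>+x. ennreal r * G K x \<partial>M)"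
    unfolding Nn_def using fin by (intro nn_integral_mono_AE) (auto elim!: eventually_mono intro: pw)
  also have "\<dots> = ennreal r * (\<integral>\<^sup>+x. G K x \<partial>M)" by (simp add: nn_integral_cmult)
  also have "\<dots> \<le> ennreal r * ennreal (A * d ^ K / (1 - r * d))" by (intro mult_left_mono intG) auto
  also have "\<dots> = ennreal (2 powr p * (A * d ^ K / (1 - 2 powr p * d)))"
    unfolding r_def using A d q by (simp add: ennreal_mult[symmetric])
  finally show "Nn M p (\<lambda>x. (\<Sum>k. a k x) - (\<Sum>k<K. a k x)) \<le> ennreal (2 powr p * (A * d ^ K / (1 - 2 powr p * d)))" .
qed

locale setting =
  fixes \<mu> :: "'g::{topological_group_add,t2_space,second_countable_topology} measure"
    and \<pi>0 :: "'g \<Rightarrow> 'v::{banach,second_countable_topology} \<Rightarrow> 'v"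
    and p :: real
  assumes lc: "lcsc_group TYPE('g)" and hm: "left_haar_measure \<mu>" and rep: "cont_rep \<pi>0" and p1: "p > 1"
begin

lemma p0: "p > 0" using p1 by simp
lemma sp[simp]: "space \<mu> = UNIV" using haar_space[OF hm] .
lemma sets_eq: "sets \<mu> = sets borel" using haar_sets[OF hm] .

lemma bl: "bounded_linear (\<pi>0 g)" using rep unfolding cont_rep_def by blast
lemma lin: "\<pi>0 g (v + w) = \<pi>0 g v + \<pi>0 g w" "\<pi>0 g (v - w) = \<pi>0 g v - \<pi>0 g w"
  "\<pi>0 g (c *\<^sub>R v) = c *\<^sub>R \<pi>0 g v" "\<pi>0 g 0 = 0" "\<pi>0 g (- v) = - \<pi>0 g v"
  using bl[of g] by (simp_all add: linear_simps)
lemma lin_sum: "\<pi>0 g (\<Sum>k\<in>A. v k) = (\<Sum>k\<in>A. \<pi>0 g (v k))"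
  using linear_sum[OF bounded_linear.linear[OF bl[of g]]] by simp
lemma comp: "\<pi>0 g (\<pi>0 h v) = \<pi>0 (g + h) v" using rep unfolding cont_rep_def by simp
lemma zero_id: "\<pi>0 0 v = v" using rep unfolding cont_rep_def by simp

lemma meas_transfer: "f \<in> borel_measurable \<mu> \<longleftrightarrow> f \<in> borel_measurable borel"
  using measurable_cong_sets[OF sets_eq refl] by blast

lemma pi_meas[measurable]:
  assumes f: "f \<in> borel_measurable \<mu>"
  shows "pi_p \<pi>0 g f \<in> borel_measurable \<mu>"
proof -
  have f': "f \<in> borel_measurable borel" using f meas_transfer by blast
  have "(\<lambda>x. f (x + g)) \<in> borel_measurable borel"
    by (rule measurable_compose[OF _ f']) (intro borel_measurable_continuous_onI continuous_intros)
  then have "(\<lambda>x. \<pi>0 g (f (x + g))) \<in> borel_measurable borel"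
    by (rule borel_measurable_continuous_on[rotated]) (intro linear_continuous_on bl)
  then show ?thesis unfolding pi_p_def using meas_transfer by blast
qed

lemma pi_comp: "pi_p \<pi>0 g (pi_p \<pi>0 h f) = pi_p \<pi>0 (g + h) f"
  unfolding pi_p_def by (simp add: comp add.assoc)

lemma pi_zero: "pi_p \<pi>0 0 f = f"
  unfolding pi_p_def by (simp add: zero_id)

lemma pi_add: "pi_p \<pi>0 g (\<lambda>x. a x + b x) x = pi_p \<pi>0 g a x + pi_p \<pi>0 g b x"
  and pi_diff: "pi_p \<pi>0 g (\<lambda>x. a x - b x) x = pi_p \<pi>0 g a x - pi_p \<pi>0 g b x"
  and pi_scale: "pi_p \<pi>0 g (\<lambda>x. c *\<^sub>R a x) x = c *\<^sub>R pi_p \<pi>0 g a x"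
  and pi_sum: "pi_p \<pi>0 g (\<lambda>x. \<Sum>k\<in>A. F k x) x = (\<Sum>k\<in>A. pi_p \<pi>0 g (F k) x)"
  and pi_0: "pi_p \<pi>0 g (\<lambda>x. 0) x = 0"
  unfolding pi_p_def by (simp_all add: lin lin_sum)

lemma right_null:
  assumes "AE x in \<mu>. P x"
  shows "AE x in \<mu>. P (x + g)"
proof -
  obtain N where N0: "{x \<in> space \<mu>. \<not> P x} \<subseteq> N" "emeasure \<mu> N = 0" "N \<in> sets \<mu>"
    using assms by (rule AE_E)
  then have N: "{x. \<not> P x} \<subseteq> N" "N \<in> null_sets \<mu>" by auto
  have Nb[measurable]: "N \<in> sets borel" using N sets_eq by auto
  obtain c :: ennreal where c: "c < \<infinity>"
    "\<forall>\<phi> \<in> borel_measurable borel. (\<integral>\<^sup>+x. \<phi> (x + g) \<partial>\<mu>) = c * (\<integral>\<^sup>+x. \<phi> x \<partial>\<mu>)"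
    using right_transl_integral[OF lc hm, of g] by blast
  have Sb: "{x. x + g \<in> N} \<in> sets \<mu>"
  proof -
    have "(\<lambda>x. x + g) \<in> borel_measurable borel" by (intro borel_measurable_continuous_onI continuous_intros)
    from measurable_sets[OF this Nb] show ?thesis using sets_eq by (simp add: vimage_def)
  qed
  have "emeasure \<mu> {x. x + g \<in> N} = (\<integral>\<^sup>+x. indicator N (x + g) \<partial>\<mu>)"
    using Sb by (simp add: nn_integral_indicator[symmetric] del: nn_integral_indicator)
      (auto intro!: nn_integral_cong simp: indicator_def)
  also have "\<dots> = c * (\<integral>\<^sup>+x. indicator N x \<partial>\<mu>)" using c(2) Nb by simp
  also have "\<dots> = 0" using N0(2,3) by simp
  finally have "{x. x + g \<in> N} \<in> null_sets \<mu>" using Sb by auto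
  moreover have "{x. \<not> P (x + g)} \<subseteq> {x. x + g \<in> N}" using N(1) by auto
  ultimately show ?thesis by (auto intro: AE_I')
qed

lemma pi_AE:
  assumes "AE x in \<mu>. f1 x = f2 x"
  shows "AE x in \<mu>. pi_p \<pi>0 g f1 x = pi_p \<pi>0 g f2 x"
  using right_null[OF assms, of g] by eventually_elim (simp add: pi_p_def)

end

context setting begin

lemma pi_local_bound:
  "\<exists>W C. open W \<and> g0 \<in> W \<and> C < \<infinity> \<and>
     (\<forall>g\<in>W. \<forall>f\<in>borel_measurable \<mu>. Nn \<mu> p (pi_p \<pi>0 g f) \<le> C * Nn \<mu> p f)"
proof -
  obtain W1 M where W1: "open W1" "g0 \<in> W1" "0 < M" "\<forall>g\<in>W1. \<forall>v. norm (\<pi>0 g v) \<le> M * norm v"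
    using rep_local_bound[OF lc rep, of g0] by blast
  obtain W2 B where W2: "open W2" "g0 \<in> W2" "B < \<infinity>"
    "\<forall>g\<in>W2. \<forall>\<phi> \<in> borel_measurable borel. (\<integral>\<^sup>+x. \<phi> (x + g) \<partial>\<mu>) \<le> B * (\<integral>\<^sup>+x. \<phi> x \<partial>\<mu>)"
    using right_transl_local_bound[OF lc hm, of g0] by blast
  define C where "C = ennreal (M powr p) * B"
  have "C < \<infinity>" unfolding C_def using W2(3) by (simp add: ennreal_mult_less_top less_top)
  moreover have "Nn \<mu> p (pi_p \<pi>0 g f) \<le> C * Nn \<mu> p f" if g: "g \<in> W1 \<inter> W2" and f: "f \<in> borel_measurable \<mu>" for g f
  proof -
    have f'[measurable]: "f \<in> borel_measurable borel" using f meas_transfer by blast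
    have "Nn \<mu> p (pi_p \<pi>0 g f) \<le> (\<integral>\<^sup>+x. ennreal (M powr p) * ennreal (norm (f (x + g)) powr p) \<partial>\<mu>)"
      unfolding Nn_def pi_p_def
    proof (intro nn_integral_mono)
      fix x
      have "norm (\<pi>0 g (f (x + g))) \<le> M * norm (f (x + g))" using W1(4) g by blast
      then have "norm (\<pi>0 g (f (x + g))) powr p \<le> (M * norm (f (x + g))) powr p"
        using p0 by (intro powr_mono2) auto
      also have "\<dots> = M powr p * norm (f (x + g)) powr p" using W1(3) by (simp add: powr_mult)
      finally show "ennreal (norm (\<pi>0 g (f (x + g))) powr p) \<le> ennreal (M powr p) * ennreal (norm (f (x + g)) powr p)"
        by (simp add: ennreal_mult[symmetric])
    qed
    also have "\<dots> = ennreal (M powr p) * (\<integral>\<^sup>+x. ennreal (norm (f (x + g)) powr p) \<partial>\<mu>)"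
    proof (rule nn_integral_cmult)
      have "(\<lambda>x. f (x + g)) \<in> borel_measurable borel"
        by (rule measurable_compose[OF _ f']) (intro borel_measurable_continuous_onI continuous_intros)
      then have "(\<lambda>x. f (x + g)) \<in> borel_measurable \<mu>" using meas_transfer by blast
      then show "(\<lambda>x. ennreal (norm (f (x + g)) powr p)) \<in> borel_measurable \<mu>" by measurable
    qed
    also have "\<dots> \<le> ennreal (M powr p) * (B * Nn \<mu> p f)"
    proof (intro mult_left_mono)
      have "(\<lambda>y. ennreal (norm (f y) powr p)) \<in> borel_measurable borel" by measurable
      then show "(\<integral>\<^sup>+x. ennreal (norm (f (x + g)) powr p) \<partial>\<mu>) \<le> B * Nn \<mu> p f"
        using W2(4)[rule_format, of g "\<lambda>y. ennreal (norm (f y) powr p)"] g unfolding Nn_def by simp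
    qed simp
    finally show ?thesis unfolding C_def by (simp add: mult.assoc)
  qed
  ultimately show ?thesis using W1 W2 by (intro exI[of _ "W1 \<inter> W2"] exI[of _ C]) auto
qed

lemma pi_bound:
  obtains C where "C < \<infinity>" "\<And>f. f \<in> borel_measurable \<mu> \<Longrightarrow> Nn \<mu> p (pi_p \<pi>0 g f) \<le> C * Nn \<mu> p f"
  using pi_local_bound[of g] by blast

lemma pi_Lp:
  assumes "f \<in> Lp \<mu> p"
  shows "pi_p \<pi>0 g f \<in> Lp \<mu> p"
proof -
  obtain C where C: "C < \<infinity>" "\<And>f. f \<in> borel_measurable \<mu> \<Longrightarrow> Nn \<mu> p (pi_p \<pi>0 g f) \<le> C * Nn \<mu> p f"
    using pi_bound by blast
  have f: "f \<in> borel_measurable \<mu>" "Nn \<mu> p f < \<infinity>" using assms Lp_iff by auto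
  have "Nn \<mu> p (pi_p \<pi>0 g f) \<le> C * Nn \<mu> p f" using C f by blast
  also have "\<dots> < \<infinity>" using C f by (simp add: ennreal_mult_less_top)
  finally show ?thesis using f by (simp add: Lp_iff pi_meas)
qed

lemma Lp_norm_scale:
  fixes f :: "'g \<Rightarrow> 'v"
  assumes [measurable]: "f \<in> borel_measurable \<mu>"
  shows "Lp_norm \<mu> p (\<lambda>x. c *\<^sub>R f x) = \<bar>c\<bar> * Lp_norm \<mu> p f"
proof -
  have m: "(\<lambda>x. c *\<^sub>R f x) \<in> borel_measurable \<mu>" by measurable
  have "Lp_norm \<mu> p (\<lambda>x. c *\<^sub>R f x) = enn2real (ennreal (\<bar>c\<bar> powr p) * Nn \<mu> p f) powr (1/p)"
    unfolding Lp_norm_Nn[OF m] by (simp add: Nn_scale[OF p0])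
  also have "\<dots> = (\<bar>c\<bar> powr p * enn2real (Nn \<mu> p f)) powr (1/p)" by (simp add: enn2real_mult)
  also have "\<dots> = \<bar>c\<bar> * enn2real (Nn \<mu> p f) powr (1/p)"
    using p0 by (simp add: powr_mult powr_powr)
  also have "\<dots> = \<bar>c\<bar> * Lp_norm \<mu> p f" by (simp add: Lp_norm_Nn)
  finally show ?thesis .
qed

lemma Lp_norm_nonneg: "Lp_norm \<mu> p (f::'g \<Rightarrow> 'v) \<ge> 0"
  unfolding Lp_norm_def by simp

lemma opnorm_bound:
  assumes f: "f \<in> Lp \<mu> p"
  shows "Lp_norm \<mu> p (pi_p \<pi>0 g f) \<le> Lp_opnorm \<mu> p \<pi>0 g * Lp_norm \<mu> p f"
proof -
  obtain C where C: "C < \<infinity>" "\<And>f. f \<in> borel_measurable \<mu> \<Longrightarrow> Nn \<mu> p (pi_p \<pi>0 g f) \<le> C * Nn \<mu> p f"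
    using pi_bound by blast
  define S where "S = {Lp_norm \<mu> p (pi_p \<pi>0 g f) | f. f \<in> Lp \<mu> p \<and> Lp_norm \<mu> p f \<le> 1}"
  have nb: "Lp_norm \<mu> p (pi_p \<pi>0 g h) \<le> enn2real C powr (1/p) * Lp_norm \<mu> p h" if h: "h \<in> Lp \<mu> p" for h
  proof -
    have hm[measurable]: "h \<in> borel_measurable \<mu>" "Nn \<mu> p h < \<infinity>" using h Lp_iff by auto
    have le: "Nn \<mu> p (pi_p \<pi>0 g h) \<le> C * Nn \<mu> p h" using C hm by blast
    have "enn2real (Nn \<mu> p (pi_p \<pi>0 g h)) \<le> enn2real (C * Nn \<mu> p h)"
      using le C hm by (intro enn2real_mono) (auto simp: ennreal_mult_less_top)
    also have "\<dots> = enn2real C * enn2real (Nn \<mu> p h)" by (simp add: enn2real_mult)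
    finally have "enn2real (Nn \<mu> p (pi_p \<pi>0 g h)) powr (1/p) \<le> (enn2real C * enn2real (Nn \<mu> p h)) powr (1/p)"
      using p0 by (intro powr_mono2) auto
    also have "\<dots> = enn2real C powr (1/p) * enn2real (Nn \<mu> p h) powr (1/p)" by (simp add: powr_mult)
    finally show ?thesis by (simp add: Lp_norm_Nn pi_meas)
  qed
  have bdd: "bdd_above S"
    unfolding S_def bdd_above_def
  proof (intro exI[of _ "enn2real C powr (1/p)"] allI ballI)
    fix x assume "x \<in> {Lp_norm \<mu> p (pi_p \<pi>0 g f) |f. f \<in> Lp \<mu> p \<and> Lp_norm \<mu> p f \<le> 1}"
    then obtain h where h: "h \<in> Lp \<mu> p" "Lp_norm \<mu> p h \<le> 1" "x = Lp_norm \<mu> p (pi_p \<pi>0 g h)" by blast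
    have "x \<le> enn2real C powr (1/p) * Lp_norm \<mu> p h" using nb[OF h(1)] h(3) by simp
    also have "\<dots> \<le> enn2real C powr (1/p) * 1" using h(2) by (intro mult_left_mono) auto
    finally show "x \<le> enn2real C powr (1/p)" by simp
  qed
  have up: "Lp_norm \<mu> p (pi_p \<pi>0 g h) \<le> Lp_opnorm \<mu> p \<pi>0 g" if "h \<in> Lp \<mu> p" "Lp_norm \<mu> p h \<le> 1" for h
    unfolding Lp_opnorm_def S_def[symmetric] using that by (intro cSup_upper bdd) (auto simp: S_def)
  have fm[measurable]: "f \<in> borel_measurable \<mu>" "Nn \<mu> p f < \<infinity>" using f Lp_iff by auto
  show ?thesis
  proof (cases "Lp_norm \<mu> p f = 0")
    case True
    have "enn2real (Nn \<mu> p f) = 0" using True p0 by (simp add: Lp_norm_Nn)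
    then have "Nn \<mu> p f = 0" using fm(2) by (auto simp: enn2real_eq_0_iff)
    then have "Nn \<mu> p (pi_p \<pi>0 g f) = 0" using C(2)[OF fm(1)] by simp
    then have "Lp_norm \<mu> p (pi_p \<pi>0 g f) = 0" using p0 by (simp add: Lp_norm_Nn pi_meas)
    then show ?thesis using True by simp
  next
    case False
    define s where "s = Lp_norm \<mu> p f"
    have s: "s > 0" using False Lp_norm_nonneg[of f] unfolding s_def by simp
    define f' where "f' = (\<lambda>x. (1/s) *\<^sub>R f x)"
    have f'm[measurable]: "f' \<in> borel_measurable \<mu>" unfolding f'_def by measurable
    have "Nn \<mu> p f' < \<infinity>" unfolding f'_def using fm by (simp add: Nn_scale[OF p0] ennreal_mult_less_top)
    then have f'L: "f' \<in> Lp \<mu> p" using f'm Lp_iff by blast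
    have "Lp_norm \<mu> p f' = 1" unfolding f'_def using s by (simp add: Lp_norm_scale s_def)
    then have "Lp_norm \<mu> p (pi_p \<pi>0 g f') \<le> Lp_opnorm \<mu> p \<pi>0 g" using up f'L by simp
    moreover have "pi_p \<pi>0 g f' = (\<lambda>x. (1/s) *\<^sub>R pi_p \<pi>0 g f x)" unfolding f'_def using pi_scale by auto
    ultimately have "(1/s) * Lp_norm \<mu> p (pi_p \<pi>0 g f) \<le> Lp_opnorm \<mu> p \<pi>0 g"
      using s by (simp add: Lp_norm_scale pi_meas)
    then show ?thesis using s unfolding s_def by (simp add: field_simps)
  qed
qed

end

lemma gpow_0[simp]: "gpow \<xi> 0 = 0" unfolding gpow_def by simp
lemma gpow_Suc: "gpow \<xi> (Suc n) = \<xi> + gpow \<xi> n" unfolding gpow_def by simp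
lemma gpow_add: "gpow \<xi> (m + n) = gpow \<xi> m + gpow \<xi> n"
  by (induction m) (simp_all add: gpow_Suc add.assoc)
lemma gpow_comm: "gpow \<xi> m + gpow \<xi> n = gpow \<xi> n + gpow \<xi> m"
  by (metis gpow_add add.commute)
lemma gpow_1: "gpow \<xi> 1 = \<xi>" unfolding gpow_def by simp

locale main = setting \<mu> \<pi>0 p for \<mu> :: "'g::{topological_group_add,t2_space,second_countable_topology} measure"
    and \<pi>0 :: "'g \<Rightarrow> 'v::{banach,second_countable_topology} \<Rightarrow> 'v" and p +
  fixes \<xi> :: 'g and b :: "'g \<Rightarrow> 'g \<Rightarrow> 'v"
  assumes contr: "contracting \<mu> p \<pi>0 \<xi>" and bZ: "b \<in> Z1 \<mu> p \<pi>0"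
begin

lemma bL: "b g \<in> Lp \<mu> p" using bZ unfolding Z1_def by blast
lemma bm[measurable]: "b g \<in> borel_measurable \<mu>" using bL Lp_iff by blast
lemma bcont: "((\<lambda>g. Lp_norm \<mu> p (\<lambda>x. b g x - b g0 x)) \<longlongrightarrow> 0) (at g0)" using bZ unfolding Z1_def by blast
lemma bcoc: "AE x in \<mu>. b (g + h) x = b g x + pi_p \<pi>0 g (b h) x" using bZ unfolding Z1_def by blast

lemma Lp_Nn: "(f::'g\<Rightarrow>'v) \<in> Lp \<mu> p \<Longrightarrow> Nn \<mu> p f = ennreal (enn2real (Nn \<mu> p f))"
  by (simp add: Lp_iff)

lemma Lp_norm_pow: "(f::'g\<Rightarrow>'v) \<in> Lp \<mu> p \<Longrightarrow> Lp_norm \<mu> p f powr p = enn2real (Nn \<mu> p f)"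
  using p0 by (simp add: Lp_iff Lp_norm_Nn powr_powr)

definition n0 where "n0 = (SOME n. Lp_opnorm \<mu> p \<pi>0 (gpow \<xi> n) < 1/4)"

lemma n0: "Lp_opnorm \<mu> p \<pi>0 (gpow \<xi> n0) < 1/4"
proof -
  have "eventually (\<lambda>n. Lp_opnorm \<mu> p \<pi>0 (gpow \<xi> n) < 1/4) sequentially"
    using contr unfolding contracting_def by (rule order_tendstoD) simp
  then obtain n where "Lp_opnorm \<mu> p \<pi>0 (gpow \<xi> n) < 1/4" by (auto simp: eventually_sequentially)
  then show ?thesis unfolding n0_def by (rule someI)
qed

definition \<gamma> where "\<gamma> = gpow \<xi> n0"
definition \<gamma>k where "\<gamma>k k = gpow \<xi> (k * n0)"
definition d where "d = (1/4::real) powr p"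

lemma \<gamma>k_0[simp]: "\<gamma>k 0 = 0" unfolding \<gamma>k_def by simp
lemma \<gamma>k_Suc: "\<gamma>k (Suc k) = \<gamma> + \<gamma>k k" "\<gamma>k (Suc k) = \<gamma>k k + \<gamma>"
  unfolding \<gamma>k_def \<gamma>_def by (simp_all add: gpow_add gpow_comm)

lemma d_pos: "d > 0" "d \<ge> 0" unfolding d_def by simp_all
lemma d_small: "2 powr p * d < 1"
proof -
  have "2 powr p * d = (1/2) powr p" unfolding d_def by (simp add: powr_mult[symmetric])
  also have "\<dots> < (1/2) powr 0" using p0 by (intro powr_less_mono') auto
  finally show ?thesis by simp
qed
lemma d_lt1: "d < 1"
proof -
  have "d \<le> 2 powr p * d" using d_pos p0 by (simp add: ge_one_powr_ge_zero)
  then show ?thesis using d_small by simp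
qed

lemma T_bound:
  assumes h: "h \<in> Lp \<mu> p"
  shows "Nn \<mu> p (pi_p \<pi>0 \<gamma> h) \<le> ennreal d * Nn \<mu> p h"
proof -
  have "Lp_norm \<mu> p (pi_p \<pi>0 \<gamma> h) \<le> Lp_opnorm \<mu> p \<pi>0 \<gamma> * Lp_norm \<mu> p h" by (rule opnorm_bound[OF h])
  also have "\<dots> \<le> (1/4) * Lp_norm \<mu> p h"
    using n0 Lp_norm_nonneg[of h] unfolding \<gamma>_def by (intro mult_right_mono) auto
  finally have "Lp_norm \<mu> p (pi_p \<pi>0 \<gamma> h) powr p \<le> ((1/4) * Lp_norm \<mu> p h) powr p"
    using p0 Lp_norm_nonneg by (intro powr_mono2) auto
  also have "\<dots> = d * Lp_norm \<mu> p h powr p" unfolding d_def using Lp_norm_nonneg[of h] by (simp add: powr_divide)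
  finally have "enn2real (Nn \<mu> p (pi_p \<pi>0 \<gamma> h)) \<le> d * enn2real (Nn \<mu> p h)"
    using Lp_norm_pow[OF h] Lp_norm_pow[OF pi_Lp[OF h]] by simp
  then have "ennreal (enn2real (Nn \<mu> p (pi_p \<pi>0 \<gamma> h))) \<le> ennreal (d * enn2real (Nn \<mu> p h))"
    by (rule ennreal_leI)
  then show ?thesis using Lp_Nn[OF h] Lp_Nn[OF pi_Lp[OF h]] d_pos by (simp add: ennreal_mult)
qed

lemma Tk_bound:
  assumes h: "h \<in> Lp \<mu> p"
  shows "Nn \<mu> p (pi_p \<pi>0 (\<gamma>k k) h) \<le> ennreal (d ^ k) * Nn \<mu> p h"
proof (induction k)
  case 0
  then show ?case by (simp add: pi_zero)
next
  case (Suc k)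
  have "pi_p \<pi>0 (\<gamma>k (Suc k)) h = pi_p \<pi>0 \<gamma> (pi_p \<pi>0 (\<gamma>k k) h)" by (simp add: pi_comp \<gamma>k_Suc(1))
  then have "Nn \<mu> p (pi_p \<pi>0 (\<gamma>k (Suc k)) h) \<le> ennreal d * Nn \<mu> p (pi_p \<pi>0 (\<gamma>k k) h)"
    using T_bound[OF pi_Lp[OF h]] by simp
  also have "\<dots> \<le> ennreal d * (ennreal (d ^ k) * Nn \<mu> p h)" using Suc by (intro mult_left_mono) auto
  also have "\<dots> = ennreal (d ^ Suc k) * Nn \<mu> p h" using d_pos by (simp add: ennreal_mult mult.assoc)
  finally show ?case .
qed

end

context main begin

definition u where "u = b \<gamma>"
definition a where "a k = pi_p \<pi>0 (\<gamma>k k) u"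
definition A where "A = enn2real (Nn \<mu> p u)"
definition f where "f x = (\<Sum>k. a k x)"
definition F where "F K x = (\<Sum>k<K. a k x)"
definition R where "R K x = f x - F K x"
definition Bd where "Bd K = 2 powr p * (A * d ^ K / (1 - 2 powr p * d))"
definition c where "c g x = b g x - f x + pi_p \<pi>0 g f x"

lemma uL: "u \<in> Lp \<mu> p" unfolding u_def by (rule bL)
lemma aL: "a k \<in> Lp \<mu> p" unfolding a_def by (rule pi_Lp[OF uL])
lemma am[measurable]: "a k \<in> borel_measurable \<mu>" using aL Lp_iff by blast
lemma A_nn: "A \<ge> 0" unfolding A_def by simp
lemma a_bound: "Nn \<mu> p (a k) \<le> ennreal (A * d ^ k)"
proof -
  have "Nn \<mu> p (a k) \<le> ennreal (d ^ k) * Nn \<mu> p u" unfolding a_def by (rule Tk_bound[OF uL])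
  also have "\<dots> = ennreal (A * d ^ k)" unfolding A_def using Lp_Nn[OF uL] d_pos
    by (metis ennreal_mult' mult.commute enn2real_nonneg)
  finally show ?thesis .
qed

lemma fm[measurable]: "f \<in> borel_measurable \<mu>" unfolding f_def by measurable
lemma Fm[measurable]: "F K \<in> borel_measurable \<mu>" unfolding F_def by measurable
lemma Rm[measurable]: "R K \<in> borel_measurable \<mu>" unfolding R_def by measurable

lemma R_bound: "Nn \<mu> p (R K) \<le> ennreal (Bd K)"
  using Lp_series(2)[OF p0 am a_bound A_nn d_pos(2) d_small, of K]
  unfolding R_def f_def F_def Bd_def by simp

lemma Bd_nn: "Bd K \<ge> 0" unfolding Bd_def using A_nn d_pos d_small by simp

lemma Bd_lim: "Bd \<longlonglongrightarrow> 0"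
proof -
  have "(\<lambda>K. d ^ K) \<longlonglongrightarrow> 0" using d_pos d_lt1 by (intro LIMSEQ_power_zero) auto
  then have "(\<lambda>K. 2 powr p * (A * d ^ K / (1 - 2 powr p * d))) \<longlonglongrightarrow> 2 powr p * (A * 0 / (1 - 2 powr p * d))"
    using d_small d_lt1 d_pos by (intro tendsto_intros) auto
  then show ?thesis unfolding Bd_def by simp
qed

lemma RL: "R K \<in> Lp \<mu> p" using R_bound[of K] by (simp add: Lp_iff order_le_less_trans)

lemma fL: "f \<in> Lp \<mu> p"
proof -
  have "R 0 = f" unfolding R_def F_def by simp
  then show ?thesis using RL[of 0] by simp
qed

lemma b0: "AE x in \<mu>. b 0 x = 0"
  using bcoc[of 0 0] by eventually_elim (simp add: pi_zero)

lemma E1: "AE x in \<mu>. pi_p \<pi>0 g (a k) x = b (g + \<gamma>k (Suc k)) x - b (g + \<gamma>k k) x"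
proof -
  have eq: "pi_p \<pi>0 g (a k) = pi_p \<pi>0 (g + \<gamma>k k) (b \<gamma>)" unfolding a_def u_def by (simp add: pi_comp)
  have gg: "g + \<gamma>k (Suc k) = (g + \<gamma>k k) + \<gamma>" by (simp add: \<gamma>k_Suc(2) add.assoc)
  show ?thesis using bcoc[of "g + \<gamma>k k" \<gamma>] unfolding eq gg by eventually_elim simp
qed

lemma E2: "AE x in \<mu>. pi_p \<pi>0 g (F K) x = b (g + \<gamma>k K) x - b g x"
proof -
  have "AE x in \<mu>. \<forall>k. pi_p \<pi>0 g (a k) x = b (g + \<gamma>k (Suc k)) x - b (g + \<gamma>k k) x"
    using E1 by (simp add: AE_all_countable)
  then show ?thesis
  proof eventually_elim
    case (elim x)
    have "pi_p \<pi>0 g (F K) x = (\<Sum>k<K. pi_p \<pi>0 g (a k) x)" unfolding F_def by (rule pi_sum)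
    also have "\<dots> = (\<Sum>k<K. b (g + \<gamma>k (Suc k)) x - b (g + \<gamma>k k) x)" using elim by simp
    also have "\<dots> = b (g + \<gamma>k K) x - b (g + \<gamma>k 0) x"
      by (rule sum_lessThan_telescope)
    finally show ?case by simp
  qed
qed

lemma E3: "AE x in \<mu>. F K x = b (\<gamma>k K) x"
  using E2[of 0 K] b0 by eventually_elim (simp add: pi_zero)

lemma R_rep: "AE x in \<mu>. c g x = (b (g + \<gamma>k K) x - b (\<gamma>k K) x) + (pi_p \<pi>0 g (R K) x - R K x)"
proof -
  have fR: "f = (\<lambda>x. R K x + F K x)" unfolding R_def by auto
  have pf: "pi_p \<pi>0 g f x = pi_p \<pi>0 g (R K) x + pi_p \<pi>0 g (F K) x" for x
    by (subst fR) (rule pi_add)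
  show ?thesis using E2[of g K] E3[of K]
    by eventually_elim (simp add: c_def pf R_def algebra_simps)
qed

end

context main begin

definition \<kappa> where "\<kappa> = 2 powr p"
lemma \<kappa>_pos: "\<kappa> > 0" "\<kappa> \<ge> 0" unfolding \<kappa>_def by simp_all

lemma Nn_add': "h1 \<in> borel_measurable \<mu> \<Longrightarrow> h2 \<in> borel_measurable \<mu> \<Longrightarrow>
  Nn \<mu> p (\<lambda>x. h1 x + h2 x) \<le> ennreal \<kappa> * (Nn \<mu> p h1 + Nn \<mu> p (h2::'g\<Rightarrow>'v))"
  unfolding \<kappa>_def by (rule Nn_add[OF p0])
lemma Nn_diff': "h1 \<in> borel_measurable \<mu> \<Longrightarrow> h2 \<in> borel_measurable \<mu> \<Longrightarrow>
  Nn \<mu> p (\<lambda>x. h1 x - h2 x) \<le> ennreal \<kappa> * (Nn \<mu> p h1 + Nn \<mu> p (h2::'g\<Rightarrow>'v))"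
  unfolding \<kappa>_def by (rule Nn_diff[OF p0])

lemma Lp_add:
  assumes "h1 \<in> Lp \<mu> p" "(h2::'g\<Rightarrow>'v) \<in> Lp \<mu> p"
  shows "(\<lambda>x. h1 x + h2 x) \<in> Lp \<mu> p"
proof -
  have m[measurable]: "h1 \<in> borel_measurable \<mu>" "h2 \<in> borel_measurable \<mu>" using assms Lp_iff by auto
  have "Nn \<mu> p (\<lambda>x. h1 x + h2 x) \<le> ennreal \<kappa> * (Nn \<mu> p h1 + Nn \<mu> p h2)" by (rule Nn_add'[OF m])
  also have "\<dots> < \<infinity>" using assms by (simp add: Lp_iff ennreal_mult_less_top)
  finally show ?thesis by (simp add: Lp_iff)
qed

lemma Lp_diff:
  assumes "h1 \<in> Lp \<mu> p" "(h2::'g\<Rightarrow>'v) \<in> Lp \<mu> p"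
  shows "(\<lambda>x. h1 x - h2 x) \<in> Lp \<mu> p"
proof -
  have m[measurable]: "h1 \<in> borel_measurable \<mu>" "h2 \<in> borel_measurable \<mu>" using assms Lp_iff by auto
  have "Nn \<mu> p (\<lambda>x. h1 x - h2 x) \<le> ennreal \<kappa> * (Nn \<mu> p h1 + Nn \<mu> p h2)" by (rule Nn_diff'[OF m])
  also have "\<dots> < \<infinity>" using assms by (simp add: Lp_iff ennreal_mult_less_top)
  finally show ?thesis by (simp add: Lp_iff)
qed

lemma cL: "c g \<in> Lp \<mu> p"
proof -
  have "(\<lambda>x. (b g x - f x) + pi_p \<pi>0 g f x) \<in> Lp \<mu> p"
    by (intro Lp_add Lp_diff bL fL pi_Lp)
  then show ?thesis unfolding c_def[abs_def] by simp
qed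

lemma cm[measurable]: "c g \<in> borel_measurable \<mu>" using cL Lp_iff by blast

lemma c_coc: "AE x in \<mu>. c (g + h) x = c g x + pi_p \<pi>0 g (c h) x"
proof -
  have ch: "c h = (\<lambda>x. (b h x - f x) + pi_p \<pi>0 h f x)" unfolding c_def by auto
  have pc: "pi_p \<pi>0 g (c h) x = pi_p \<pi>0 g (b h) x - pi_p \<pi>0 g f x + pi_p \<pi>0 (g + h) f x" for x
    unfolding ch pi_add pi_diff by (simp add: pi_comp[symmetric])
  show ?thesis using bcoc[of g h] by eventually_elim (simp add: c_def pc algebra_simps)
qed

lemma bc_B1: "(\<lambda>g x. b g x - c g x) \<in> B1 \<mu> p \<pi>0"
  unfolding B1_def using fL by (auto simp: c_def)

end

context main begin

lemma Nn_AE_split: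
  assumes "AE x in \<mu>. h x = D x + E x" "D \<in> borel_measurable \<mu>" "E \<in> borel_measurable \<mu>"
  shows "Nn \<mu> p (h::'g\<Rightarrow>'v) \<le> ennreal \<kappa> * (Nn \<mu> p D + Nn \<mu> p E)"
proof -
  have "Nn \<mu> p h = Nn \<mu> p (\<lambda>x. D x + E x)" using assms(1) by (rule Nn_cong_AE)
  also have "\<dots> \<le> ennreal \<kappa> * (Nn \<mu> p D + Nn \<mu> p E)" using assms(2,3) by (rule Nn_add')
  finally show ?thesis .
qed

lemma E_bound:
  assumes C: "\<And>h. h \<in> borel_measurable \<mu> \<Longrightarrow> Nn \<mu> p (pi_p \<pi>0 g h) \<le> ennreal Cr * Nn \<mu> p h"
    and C1: "\<And>h. h \<in> borel_measurable \<mu> \<Longrightarrow> Nn \<mu> p (pi_p \<pi>0 g' h) \<le> ennreal Cr' * Nn \<mu> p h"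
    and Cr: "Cr \<ge> 0" "Cr' \<ge> 0"
  shows "Nn \<mu> p (\<lambda>x. pi_p \<pi>0 g (R K) x - pi_p \<pi>0 g' (R K) x) \<le> ennreal (\<kappa> * (Cr * Bd K + Cr' * Bd K))"
proof -
  have "Nn \<mu> p (\<lambda>x. pi_p \<pi>0 g (R K) x - pi_p \<pi>0 g' (R K) x)
      \<le> ennreal \<kappa> * (Nn \<mu> p (pi_p \<pi>0 g (R K)) + Nn \<mu> p (pi_p \<pi>0 g' (R K)))"
    by (intro Nn_diff' pi_meas Rm)
  also have "\<dots> \<le> ennreal \<kappa> * (ennreal Cr * ennreal (Bd K) + ennreal Cr' * ennreal (Bd K))"
    by (intro mult_left_mono add_mono order_trans[OF C[OF Rm]] order_trans[OF C1[OF Rm]]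
        mult_left_mono R_bound) auto
  also have "\<dots> = ennreal (\<kappa> * (Cr * Bd K + Cr' * Bd K))"
    using Cr Bd_nn[of K] \<kappa>_pos by (simp add: ennreal_mult[symmetric] ennreal_plus[symmetric] del: ennreal_plus)
  finally show ?thesis .
qed

lemma pi_boundr:
  obtains Cr where "Cr \<ge> 0" "\<And>h. h \<in> borel_measurable \<mu> \<Longrightarrow> Nn \<mu> p (pi_p \<pi>0 g h) \<le> ennreal Cr * Nn \<mu> p h"
proof -
  obtain C where C: "C < \<infinity>" "\<And>f. f \<in> borel_measurable \<mu> \<Longrightarrow> Nn \<mu> p (pi_p \<pi>0 g f) \<le> C * Nn \<mu> p f"
    using pi_bound by blast
  have "C = ennreal (enn2real C)" using C(1) by simp
  then show ?thesis using that[of "enn2real C"] C(2) by simp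
qed

lemma c_xi: "AE x in \<mu>. c \<xi> x = 0"
proof -
  obtain Cr where Cr: "Cr \<ge> 0" "\<And>h. h \<in> borel_measurable \<mu> \<Longrightarrow> Nn \<mu> p (pi_p \<pi>0 \<xi> h) \<le> ennreal Cr * Nn \<mu> p h"
    using pi_boundr by blast
  have one: "\<And>h. h \<in> borel_measurable \<mu> \<Longrightarrow> Nn \<mu> p (pi_p \<pi>0 0 h) \<le> ennreal 1 * Nn \<mu> p h"
    by (simp add: pi_zero)
  define Qb where "Qb = enn2real (Nn \<mu> p (b \<xi>))"
  have Qb: "Qb \<ge> 0" "Nn \<mu> p (b \<xi>) = ennreal Qb" unfolding Qb_def using Lp_Nn[OF bL] by auto
  define X where "X K = \<kappa> * (d ^ K * Qb + \<kappa> * (Cr * Bd K + 1 * Bd K))" for K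
  have bnd: "Nn \<mu> p (c \<xi>) \<le> ennreal (X K)" for K
  proof -
    define D where "D = pi_p \<pi>0 (\<gamma>k K) (b \<xi>)"
    define E where "E x = pi_p \<pi>0 \<xi> (R K) x - pi_p \<pi>0 0 (R K) x" for x
    have Dm[measurable]: "D \<in> borel_measurable \<mu>" unfolding D_def by measurable
    have Em[measurable]: "E \<in> borel_measurable \<mu>" unfolding E_def by measurable
    have comm: "\<xi> + \<gamma>k K = \<gamma>k K + \<xi>" unfolding \<gamma>k_def using gpow_comm[of \<xi> 1 "K * n0"] unfolding gpow_1 .
    have "AE x in \<mu>. c \<xi> x = D x + E x"
      using R_rep[of \<xi> K] bcoc[of "\<gamma>k K" \<xi>]
      by eventually_elim (simp add: D_def E_def pi_zero comm)
    then have "Nn \<mu> p (c \<xi>) \<le> ennreal \<kappa> * (Nn \<mu> p D + Nn \<mu> p E)" by (rule Nn_AE_split) simp_all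
    also have "\<dots> \<le> ennreal \<kappa> * (ennreal (d ^ K) * Nn \<mu> p (b \<xi>) + ennreal (\<kappa> * (Cr * Bd K + 1 * Bd K)))"
      unfolding D_def E_def
      by (intro mult_left_mono add_mono Tk_bound bL E_bound Cr one) auto
    also have "\<dots> = ennreal (X K)" unfolding X_def Qb(2)
      using Qb Cr Bd_nn[of K] \<kappa>_pos d_pos
      by (simp add: ennreal_mult[symmetric] ennreal_plus[symmetric] del: ennreal_plus)
    finally show ?thesis .
  qed
  have "X \<longlonglongrightarrow> \<kappa> * (0 * Qb + \<kappa> * (Cr * 0 + 1 * 0))"
    unfolding X_def using d_pos d_lt1 by (intro tendsto_intros Bd_lim LIMSEQ_power_zero) auto
  then have "(\<lambda>K. ennreal (X K)) \<longlonglongrightarrow> ennreal 0" by (intro tendsto_ennrealI) simp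
  then have "Nn \<mu> p (c \<xi>) \<le> ennreal 0" by (rule LIMSEQ_le_const) (use bnd in auto)
  then have "Nn \<mu> p (c \<xi>) = 0" by simp
  then show ?thesis by (rule Nn_zero_AE[OF p0 cm])
qed

end

context main begin

lemma shift_lim: "((\<lambda>g. Lp_norm \<mu> p (\<lambda>x. b (g + t) x - b (g0 + t) x)) \<longlongrightarrow> 0) (at g0)"
proof -
  have fl: "filterlim (\<lambda>g. g + t) (at (g0 + t)) (at g0)"
  proof (subst filterlim_at, intro conjI)
    show "\<forall>\<^sub>F x in at g0. x + t \<in> UNIV \<and> x + t \<noteq> g0 + t"
      by (auto simp: eventually_at_filter)
    show "((\<lambda>g. g + t) \<longlongrightarrow> g0 + t) (at g0)" by (intro tendsto_intros)
  qed
  show ?thesis using filterlim_compose[OF bcont[of "g0 + t"] fl] by simp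
qed

lemma c_cont: "((\<lambda>g. Lp_norm \<mu> p (\<lambda>x. c g x - c g0 x)) \<longlongrightarrow> 0) (at g0)"
proof -
  obtain W C where WC: "open W" "g0 \<in> W" "C < \<infinity>"
    "\<forall>g\<in>W. \<forall>f\<in>borel_measurable \<mu>. Nn \<mu> p (pi_p \<pi>0 g f) \<le> C * Nn \<mu> p f"
    using pi_local_bound[of g0] by blast
  define Cr where "Cr = enn2real C"
  have Cr: "Cr \<ge> 0" "C = ennreal Cr" unfolding Cr_def using WC(3) by auto
  have Cb: "Nn \<mu> p (pi_p \<pi>0 g h) \<le> ennreal Cr * Nn \<mu> p h" if "g \<in> W" "h \<in> borel_measurable \<mu>" for g h
    using WC(4) that Cr by auto
  define q where "q g = enn2real (Nn \<mu> p (\<lambda>x. c g x - c g0 x))" for g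
  define qD where "qD K g = enn2real (Nn \<mu> p (\<lambda>x. b (g + \<gamma>k K) x - b (g0 + \<gamma>k K) x))" for K g
  have dL: "(\<lambda>x. c g x - c g0 x) \<in> Lp \<mu> p" for g by (intro Lp_diff cL)
  have DL: "(\<lambda>x. b (g + \<gamma>k K) x - b (g0 + \<gamma>k K) x) \<in> Lp \<mu> p" for g K by (intro Lp_diff bL)
  have qbound: "q g \<le> \<kappa> * (qD K g + \<kappa> * (Cr * Bd K + Cr * Bd K))" if g: "g \<in> W" for g K
  proof -
    define D where "D x = b (g + \<gamma>k K) x - b (g0 + \<gamma>k K) x" for x
    define E where "E x = pi_p \<pi>0 g (R K) x - pi_p \<pi>0 g0 (R K) x" for x
    have Dm[measurable]: "D \<in> borel_measurable \<mu>" unfolding D_def by measurable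
    have Em[measurable]: "E \<in> borel_measurable \<mu>" unfolding E_def by measurable
    have "AE x in \<mu>. c g x - c g0 x = D x + E x"
      using R_rep[of g K] R_rep[of g0 K]
    proof eventually_elim
      case (elim x)
      show ?case unfolding elim(1) elim(2) D_def E_def by (simp add: algebra_simps)
    qed
    then have "Nn \<mu> p (\<lambda>x. c g x - c g0 x) \<le> ennreal \<kappa> * (Nn \<mu> p D + Nn \<mu> p E)"
      by (rule Nn_AE_split) simp_all
    also have "\<dots> \<le> ennreal \<kappa> * (ennreal (qD K g) + ennreal (\<kappa> * (Cr * Bd K + Cr * Bd K)))"
      unfolding E_def
      by (intro mult_left_mono add_mono E_bound Cb g WC(2) Cr(1))
        (auto simp: D_def[abs_def] qD_def Lp_Nn[OF DL, symmetric])
    also have "\<dots> = ennreal (\<kappa> * (qD K g + \<kappa> * (Cr * Bd K + Cr * Bd K)))"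
      using Cr Bd_nn[of K] \<kappa>_pos by (simp add: qD_def ennreal_mult[symmetric] ennreal_plus[symmetric] del: ennreal_plus)
    finally have "ennreal (q g) \<le> ennreal (\<kappa> * (qD K g + \<kappa> * (Cr * Bd K + Cr * Bd K)))"
      unfolding q_def using Lp_Nn[OF dL] by simp
    then show ?thesis using Cr Bd_nn[of K] \<kappa>_pos
      by (subst (asm) ennreal_le_iff) (auto simp: qD_def intro!: add_nonneg_nonneg mult_nonneg_nonneg)
  qed
  have qD_lim: "((\<lambda>g. qD K g) \<longlongrightarrow> 0) (at g0)" for K
  proof -
    have "((\<lambda>g. Lp_norm \<mu> p (\<lambda>x. b (g + \<gamma>k K) x - b (g0 + \<gamma>k K) x) powr p) \<longlongrightarrow> 0 powr p) (at g0)"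
      using p0 by (intro tendsto_powr' shift_lim) (auto simp: Lp_norm_nonneg)
    then show ?thesis unfolding qD_def using p0 by (simp add: Lp_norm_pow[OF DL])
  qed
  have q_lim: "(q \<longlongrightarrow> 0) (at g0)"
  proof (rule order_tendstoI)
    fix e :: real assume "e < 0"
    have "e < q g" for g using \<open>e < 0\<close> enn2real_nonneg[of "Nn \<mu> p (\<lambda>x. c g x - c g0 x)"] unfolding q_def by linarith
    then show "\<forall>\<^sub>F g in at g0. e < q g" by simp
  next
    fix e :: real assume e: "0 < e"
    have "(\<lambda>K. \<kappa> * (\<kappa> * (Cr * Bd K + Cr * Bd K))) \<longlonglongrightarrow> \<kappa> * (\<kappa> * (Cr * 0 + Cr * 0))"
      by (intro tendsto_intros Bd_lim)
    then have "\<forall>\<^sub>F K in sequentially. \<kappa> * (\<kappa> * (Cr * Bd K + Cr * Bd K)) < e / 2"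
      using e by (intro order_tendstoD) auto
    then obtain K where K: "\<kappa> * (\<kappa> * (Cr * Bd K + Cr * Bd K)) < e / 2"
      by (auto simp: eventually_sequentially)
    have "\<forall>\<^sub>F g in at g0. \<kappa> * qD K g < e / 2"
    proof -
      have "((\<lambda>g. \<kappa> * qD K g) \<longlongrightarrow> \<kappa> * 0) (at g0)" by (intro tendsto_intros qD_lim)
      then show ?thesis using e by (intro order_tendstoD) auto
    qed
    moreover have "\<forall>\<^sub>F g in at g0. g \<in> W" using WC(1,2) by (rule eventually_at_in_open')
    ultimately show "\<forall>\<^sub>F g in at g0. q g < e"
    proof eventually_elim
      case (elim g)
      have "q g \<le> \<kappa> * (qD K g + \<kappa> * (Cr * Bd K + Cr * Bd K))" by (rule qbound[OF elim(2)])
      also have "\<dots> = \<kappa> * qD K g + \<kappa> * (\<kappa> * (Cr * Bd K + Cr * Bd K))" by (simp add: algebra_simps)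
      also have "\<dots> < e / 2 + e / 2" using elim(1) K by simp
      finally show ?case by simp
    qed
  qed
  have "((\<lambda>g. q g powr (1/p)) \<longlongrightarrow> 0 powr (1/p)) (at g0)"
    using p0 by (intro tendsto_powr' q_lim) (auto simp: q_def)
  moreover have "Lp_norm \<mu> p (\<lambda>x. c g x - c g0 x) = q g powr (1/p)" for g
    unfolding q_def by (rule Lp_norm_Nn) measurable
  ultimately show ?thesis using p0 by simp
qed

lemma cZ: "c \<in> Z1 \<mu> p \<pi>0"
  unfolding Z1_def using cL c_cont c_coc by blast

lemma result: "\<exists>c \<in> Z1 \<mu> p \<pi>0. (\<lambda>g x. b g x - c g x) \<in> B1 \<mu> p \<pi>0 \<and> (AE x in \<mu>. c \<xi> x = 0)"
  using cZ bc_B1 c_xi by blast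

end


theorem proposition2:
  fixes \<mu> :: "'g::{topological_group_add,t2_space,second_countable_topology} measure"
    and \<pi>0 :: "'g \<Rightarrow> 'v::{banach,second_countable_topology} \<Rightarrow> 'v"
    and p :: real and \<xi> :: 'g and b :: "'g \<Rightarrow> 'g \<Rightarrow> 'v"
  assumes "lcsc_group TYPE('g)"
    and "left_haar_measure \<mu>"
    and "cont_rep \<pi>0"
    and "p > 1"
    and "contracting \<mu> p \<pi>0 \<xi>"
    and "b \<in> Z1 \<mu> p \<pi>0"
  shows "\<exists>c \<in> Z1 \<mu> p \<pi>0. (\<lambda>g x. b g x - c g x) \<in> B1 \<mu> p \<pi>0 \<and> (AE x in \<mu>. c \<xi> x = 0)"
proof -
  interpret main \<mu> \<pi>0 p \<xi> b
    using assms by unfold_locales auto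
  show ?thesis by (rule result)
qed

end
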